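(* Let $G$ be a primitive strongly regular graph with parameters $(v,k,\lambda,\mu)$. Then $k/\Lambda(G) > \sqrt{k/\sqrt{v}}$.
   Context: A graph is strongly regular with parameters $(v,k,\lambda,\mu)$ if it is a $k$-regular graph on $v$ vertices such that each edge lies in exactly $\lambda$ triangles and any two distinct non-adjacent vertices have exactly $\mu$ common neighbours; complete and edgeless graphs are excluded. A strongly regular graph is primitive if both it and its complement are connected. For a $k$-regular graph with adjacency eigenvalues $k=\lambda_1\ge\dots\ge\lambda_v$, $\Lambda(G)=\max\{|\lambda_i|: 2\le i\le v\}$. *)

theory Defs
  imports "Jordan_Normal_Form.Char_Poly" "HOL-Computational_Algebra.Fundamental_Theorem_Algebra"
begin

text \<open>Simple graphs on the vertex set {0..<v}, given by an adjacency predicate E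
  (only its values on pairs of vertices matter).\<close>

definition simple_graph :: "nat \<Rightarrow> (nat \<Rightarrow> nat \<Rightarrow> bool) \<Rightarrow> bool" where
  "simple_graph v E \<longleftrightarrow> (\<forall>i<v. \<not> E i i) \<and> (\<forall>i<v. \<forall>j<v. E i j \<longrightarrow> E j i)"

definition strongly_regular ::
  "nat \<Rightarrow> (nat \<Rightarrow> nat \<Rightarrow> bool) \<Rightarrow> nat \<Rightarrow> nat \<Rightarrow> nat \<Rightarrow> bool" where
  "strongly_regular v E k lam mu \<longleftrightarrow>
     simple_graph v E \<and>
     (\<forall>i<v. card {j. j < v \<and> E i j} = k) \<and>
     (\<forall>i<v. \<forall>j<v. E i j \<longrightarrow> card {l. l < v \<and> E i l \<and> E j l} = lam) \<and>
     (\<forall>i<v. \<forall>j<v. i \<noteq> j \<and> \<not> E i j \<longrightarrow> card {l. l < v \<and> E i l \<and> E j l} = mu) \<and>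
     \<comment> \<open>not complete\<close>
     (\<exists>i<v. \<exists>j<v. i \<noteq> j \<and> \<not> E i j) \<and>
     \<comment> \<open>not edgeless\<close>
     (\<exists>i<v. \<exists>j<v. E i j)"

definition connected_graph :: "nat \<Rightarrow> (nat \<Rightarrow> nat \<Rightarrow> bool) \<Rightarrow> bool" where
  "connected_graph v E \<longleftrightarrow>
     (\<forall>i<v. \<forall>j<v. (\<lambda>a b. a < v \<and> b < v \<and> E a b)\<^sup>*\<^sup>* i j)"

definition complement_graph :: "(nat \<Rightarrow> nat \<Rightarrow> bool) \<Rightarrow> nat \<Rightarrow> nat \<Rightarrow> bool" where
  "complement_graph E = (\<lambda>i j. i \<noteq> j \<and> \<not> E i j)"

definition primitive_srg ::
  "nat \<Rightarrow> (nat \<Rightarrow> nat \<Rightarrow> bool) \<Rightarrow> nat \<Rightarrow> nat \<Rightarrow> nat \<Rightarrow> bool" where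
  "primitive_srg v E k lam mu \<longleftrightarrow>
     strongly_regular v E k lam mu \<and> connected_graph v E \<and>
     connected_graph v (complement_graph E)"

definition adj_matrix :: "nat \<Rightarrow> (nat \<Rightarrow> nat \<Rightarrow> bool) \<Rightarrow> real mat" where
  "adj_matrix v E = mat v v (\<lambda>(i, j). if E i j then 1 else 0)"

definition adj_eigenvalues :: "nat \<Rightarrow> (nat \<Rightarrow> nat \<Rightarrow> bool) \<Rightarrow> complex multiset" where
  "adj_eigenvalues v E = proots (char_poly (map_mat complex_of_real (adj_matrix v E)))"

text \<open>For a k-regular graph, lambda_1 = k; Lambda(G) is the largest absolute value
  among the remaining eigenvalues lambda_2, ..., lambda_v (one copy of k removed).\<close>
definition Lambda_reg :: "nat \<Rightarrow> (nat \<Rightarrow> nat \<Rightarrow> bool) \<Rightarrow> nat \<Rightarrow> real" where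
  "Lambda_reg v E k =
     Max (cmod ` set_mset (adj_eigenvalues v E - {# complex_of_real (real k) #}))"

end

theory Submission
  imports Defs "Jordan_Normal_Form.Schur_Decomposition"
begin

locale srgp =
  fixes v :: nat and E :: "nat \<Rightarrow> nat \<Rightarrow> bool" and k lam mu :: nat
  assumes prim: "primitive_srg v E k lam mu"
begin

definition adj :: "nat \<Rightarrow> nat \<Rightarrow> real" where "adj i j = (if E i j then 1 else 0)"

lemma srg: "strongly_regular v E k lam mu" using prim unfolding primitive_srg_def by simp

lemma srg_deg: "\<forall>i<v. card {j. j < v \<and> E i j} = k"
  using srg unfolding strongly_regular_def by (elim conjE)
lemma srg_lam: "\<forall>i<v. \<forall>j<v. E i j \<longrightarrow> card {l. l < v \<and> E i l \<and> E j l} = lam"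
  using srg unfolding strongly_regular_def by (elim conjE)
lemma srg_mu: "\<forall>i<v. \<forall>j<v. i \<noteq> j \<and> \<not> E i j \<longrightarrow> card {l. l < v \<and> E i l \<and> E j l} = mu"
  using srg unfolding strongly_regular_def by (elim conjE)
lemma srg_sg: "simple_graph v E"
  using srg unfolding strongly_regular_def by (elim conjE)
lemma irrefl: "i < v \<Longrightarrow> \<not> E i i"
  using srg_sg unfolding simple_graph_def by blast

lemma symE: "i < v \<Longrightarrow> j < v \<Longrightarrow> E i j = E j i"
  using srg_sg unfolding simple_graph_def by blast

lemma deg_card: "i < v \<Longrightarrow> card {j. j < v \<and> E i j} = k"
  using srg_deg by blast

lemma lam_card: "i < v \<Longrightarrow> j < v \<Longrightarrow> E i j \<Longrightarrow> card {l. l < v \<and> E i l \<and> E j l} = lam"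
  using srg_lam by blast

lemma mu_card: "i < v \<Longrightarrow> j < v \<Longrightarrow> i \<noteq> j \<Longrightarrow> \<not> E i j \<Longrightarrow> card {l. l < v \<and> E i l \<and> E j l} = mu"
  using srg_mu by blast

lemma noncomplete: "\<exists>i<v. \<exists>j<v. i \<noteq> j \<and> \<not> E i j"
  using srg unfolding strongly_regular_def by (elim conjE)

lemma nonempty_edge: "\<exists>i<v. \<exists>j<v. E i j"
  using srg unfolding strongly_regular_def by (elim conjE)

lemma card_sum: "real (card {l. l < v \<and> P l}) = (\<Sum>l<v. if P l then 1 else 0)"
proof -
  have "{l. l < v \<and> P l} = {..<v} \<inter> {l. P l}" by auto
  then show ?thesis by (simp add: sum.If_cases)
qed

lemma deg_sum: "i < v \<Longrightarrow> (\<Sum>l<v. adj i l) = real k"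
  using card_sum[of "E i"] deg_card[of i] by (simp add: adj_def)

lemma deg_sum': "j < v \<Longrightarrow> (\<Sum>l<v. adj l j) = real k"
proof -
  assume j: "j < v"
  have "(\<Sum>l<v. adj l j) = (\<Sum>l<v. adj j l)"
    by (rule sum.cong, simp, insert j, auto simp: adj_def symE)
  then show ?thesis using deg_sum[OF j] by simp
qed

lemma cn_sum: assumes i: "i < v" and j: "j < v"
  shows "(\<Sum>l<v. adj i l * adj l j) = (if i = j then real k else if E i j then real lam else real mu)"
proof -
  have "(\<Sum>l<v. adj i l * adj l j) = (\<Sum>l<v. if E i l \<and> E j l then 1 else 0)"
    by (rule sum.cong, simp, insert j, auto simp: adj_def symE)
  also have "\<dots> = real (card {l. l < v \<and> E i l \<and> E j l})" using card_sum[of "\<lambda>l. E i l \<and> E j l"] by simp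
  finally show ?thesis using deg_card[OF i] lam_card[OF i j] mu_card[OF i j] by auto
qed

lemma v_pos: "0 < v" using nonempty_edge by auto

lemma nonadj_sum: assumes i: "i < v"
  shows "(\<Sum>j<v. if j \<noteq> i \<and> \<not> E i j then 1 else 0) = real v - 1 - real k"
proof -
  have "(\<Sum>j<v. (if j = i then 1 else 0) + adj i j + (if j \<noteq> i \<and> \<not> E i j then 1 else 0)) = (\<Sum>j<v. (1::real))"
    by (rule sum.cong, simp, insert irrefl[OF i], auto simp: adj_def)
  then have "1 + real k + (\<Sum>j<v. if j \<noteq> i \<and> \<not> E i j then 1 else 0) = real v"
    using i deg_sum[OF i] by (simp add: sum.distrib)
  then show ?thesis by linarith
qed

lemma counting: "real k * real k = real k + real lam * real k + real mu * (real v - 1 - real k)"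
proof -
  have i: "0 < v" by (rule v_pos)
  have "(\<Sum>j<v. \<Sum>l<v. adj 0 l * adj l j) = (\<Sum>l<v. adj 0 l * (\<Sum>j<v. adj l j))"
    by (subst sum.swap, simp add: sum_distrib_left)
  also have "\<dots> = (\<Sum>l<v. adj 0 l * real k)" by (rule sum.cong, auto simp: deg_sum)
  also have "\<dots> = real k * real k" using deg_sum[OF i] by (simp add: sum_distrib_right[symmetric])
  finally have 1: "(\<Sum>j<v. \<Sum>l<v. adj 0 l * adj l j) = real k * real k" .
  have "(\<Sum>j<v. \<Sum>l<v. adj 0 l * adj l j) = (\<Sum>j<v. real k * (if j = 0 then 1 else 0) + real lam * adj 0 j + real mu * (if j \<noteq> 0 \<and> \<not> E 0 j then 1 else 0))"
    by (rule sum.cong, simp, subst cn_sum, insert i irrefl[OF i], auto simp: adj_def)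
  also have "\<dots> = real k + real lam * real k + real mu * (real v - 1 - real k)"
    using i nonadj_sum[OF i] deg_sum[OF i] by (simp add: sum.distrib sum_distrib_left[symmetric])
  finally show ?thesis using 1 by simp
qed

end

context srgp begin

lemma conn: "connected_graph v E" using prim unfolding primitive_srg_def by simp
lemma conn2: "connected_graph v (complement_graph E)" using prim unfolding primitive_srg_def by simp

lemma mu_pos: "mu > 0"
proof (rule ccontr)
  assume "\<not> mu > 0" then have mu0: "mu = 0" by simp
  let ?R = "\<lambda>a b. a < v \<and> b < v \<and> E a b"
  have key: "?R\<^sup>*\<^sup>* i j \<Longrightarrow> i < v \<Longrightarrow> i = j \<or> E i j" for i j
  proof (induction rule: rtranclp_induct)
    case base then show ?case by simp
  next
    case (step j l)
    from step have jl: "j < v" "l < v" "E j l" by auto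
    from step have "i = j \<or> E i j" by simp
    then show ?case
    proof
      assume "i = j" then show ?thesis using jl by simp
    next
      assume ij: "E i j"
      show ?thesis
      proof (rule ccontr)
        assume "\<not> (i = l \<or> E i l)"
        then have "card {x. x < v \<and> E i x \<and> E l x} = 0" using mu_card[of i l] step.prems jl mu0 by auto
        moreover have "j \<in> {x. x < v \<and> E i x \<and> E l x}" using ij jl symE[of j l] by auto
        moreover have "finite {x. x < v \<and> E i x \<and> E l x}" by simp
        ultimately show False by (metis card_0_eq empty_iff)
      qed
    qed
  qed
  obtain i j where ij: "i < v" "j < v" "i \<noteq> j" "\<not> E i j" using noncomplete by blast
  have "?R\<^sup>*\<^sup>* i j" using conn ij unfolding connected_graph_def by blast
  from key[OF this ij(1)] ij show False by simp
qed

lemma nbr_eq: assumes muk: "mu = k" and a: "a < v" and b: "b < v" and ab: "a \<noteq> b" "\<not> E a b"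
  shows "{l. l < v \<and> E a l} = {l. l < v \<and> E b l}"
proof -
  let ?S = "{l. l < v \<and> E a l \<and> E b l}"
  have cS: "card ?S = k" using mu_card[OF a b ab] muk by simp
  have "?S = {l. l < v \<and> E a l}"
    by (rule card_subset_eq, simp, blast, simp add: cS deg_card[OF a])
  moreover have "?S = {l. l < v \<and> E b l}"
    by (rule card_subset_eq, simp, blast, simp add: cS deg_card[OF b])
  ultimately show ?thesis by simp
qed

lemma mu_le_k: "mu \<le> k"
proof -
  obtain i j where ij: "i < v" "j < v" "i \<noteq> j" "\<not> E i j" using noncomplete by blast
  have "card {l. l < v \<and> E i l \<and> E j l} \<le> card {l. l < v \<and> E i l}"
    by (rule card_mono, auto)
  then show ?thesis using mu_card[OF ij] deg_card[OF ij(1)] by simp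
qed

lemma mu_lt_k: "mu < k"
proof (rule ccontr)
  assume "\<not> mu < k" then have muk: "mu = k" using mu_le_k by simp
  let ?R = "\<lambda>a b. a < v \<and> b < v \<and> complement_graph E a b"
  have key: "?R\<^sup>*\<^sup>* i j \<Longrightarrow> {l. l < v \<and> E i l} = {l. l < v \<and> E j l}" for i j
  proof (induction rule: rtranclp_induct)
    case base then show ?case by simp
  next
    case (step j l)
    then have "{l'. l' < v \<and> E j l'} = {l'. l' < v \<and> E l l'}"
      using nbr_eq[OF muk] unfolding complement_graph_def by blast
    then show ?case using step.IH by simp
  qed
  obtain i j where ij: "i < v" "j < v" "E i j" using nonempty_edge by blast
  have "?R\<^sup>*\<^sup>* i j" using conn2 ij unfolding connected_graph_def by blast
  from key[OF this] have "j \<in> {l. l < v \<and> E j l}" using ij by blast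
  then show False using irrefl[OF ij(2)] by simp
qed

lemma k_le: "k + 2 \<le> v"
proof -
  obtain i j where ij: "i < v" "j < v" "i \<noteq> j" "\<not> E i j" using noncomplete by blast
  have "{l. l < v \<and> E i l} \<subseteq> {..<v} - {i, j}" using ij irrefl[OF ij(1)] by auto
  then have "card {l. l < v \<and> E i l} \<le> card ({..<v} - {i, j})" by (rule card_mono[rotated], simp)
  also have "\<dots> = v - 2" using ij by (simp add: card_Diff_subset)
  finally show ?thesis using deg_card[OF ij(1)] ij by linarith
qed

end

context srgp begin

abbreviation "K \<equiv> real k"
abbreviation "L \<equiv> real lam"
abbreviation "M \<equiv> real mu"
abbreviation "V \<equiv> real v"

definition "Dsc = (L - M)^2 + 4 * (K - M)"
definition "r = ((L - M) + sqrt Dsc) / 2"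
definition "s = ((L - M) - sqrt Dsc) / 2"

lemma M_pos: "M > 0" using mu_pos by simp
lemma M_lt_K: "M < K" using mu_lt_k by simp
lemma V_ge: "K + 2 \<le> V" using k_le by simp
lemma V_pos: "V > 0" using v_pos by simp
lemma count_id: "K * K = K + L * K + M * (V - 1 - K)" using counting by simp

lemma Dsc_pos: "Dsc > 0"
proof -
  have "(L - M)^2 \<ge> 0" by simp
  moreover have "4 * (K - M) > 0" using M_lt_K by simp
  ultimately show ?thesis unfolding Dsc_def by (rule add_nonneg_pos)
qed

lemma rs_sum: "r + s = L - M" unfolding r_def s_def by (simp add: field_simps)
lemma rs_prod: "r * s = M - K"
proof -
  have "r * s = ((L - M)^2 - (sqrt Dsc)^2) / 4" unfolding r_def s_def by (simp add: power2_eq_square algebra_simps)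
  also have "(sqrt Dsc)^2 = Dsc" using Dsc_pos by simp
  finally show ?thesis unfolding Dsc_def by simp
qed
lemma r_gt_s: "s < r" unfolding r_def s_def using Dsc_pos by simp
lemma r_pos: "r > 0" and s_neg: "s < 0"
proof -
  have n: "r * s < 0" using rs_prod M_lt_K by simp
  show "r > 0"
  proof (rule ccontr)
    assume "\<not> r > 0" then have "r \<le> 0" "s \<le> 0" using r_gt_s by auto
    then have "r * s \<ge> 0" by (rule mult_nonpos_nonpos)
    then show False using n by simp
  qed
  show "s < 0"
  proof (rule ccontr)
    assume "\<not> s < 0" then have "r \<ge> 0" "s \<ge> 0" using r_gt_s by auto
    then have "r * s \<ge> 0" by simp
    then show False using n by simp
  qed
qed
lemma r_eq: "r^2 = (L - M) * r + (K - M)"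
proof -
  have "r^2 = (r + s) * r - r * s" by (simp add: power2_eq_square algebra_simps)
  then show ?thesis unfolding rs_sum rs_prod by simp
qed
lemma s_eq: "s^2 = (L - M) * s + (K - M)"
proof -
  have "s^2 = (r + s) * s - r * s" by (simp add: power2_eq_square algebra_simps)
  then show ?thesis unfolding rs_sum rs_prod by simp
qed

lemma pK: "(K - r) * (K - s) = M * V"
proof -
  have "(K - r) * (K - s) = K*K - K * (r + s) + r * s" by (simp add: algebra_simps)
  also have "\<dots> = M * V" unfolding rs_sum rs_prod using count_id by (simp add: algebra_simps)
  finally show ?thesis .
qed

lemma lam_lt: "lam < k"
proof -
  obtain i j where ij: "i < v" "j < v" "E i j" using nonempty_edge by blast
  have "{l. l < v \<and> E i l \<and> E j l} \<subseteq> {l. l < v \<and> E i l} - {j}" using irrefl[OF ij(2)] by auto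
  then have "card {l. l < v \<and> E i l \<and> E j l} \<le> card ({l. l < v \<and> E i l} - {j})" by (intro card_mono) auto
  moreover have "card ({l. l < v \<and> E i l} - {j}) < card {l. l < v \<and> E i l}"
    by (rule card_Diff1_less) (use ij in auto)
  ultimately have "card {l. l < v \<and> E i l \<and> E j l} < card {l. l < v \<and> E i l}" by simp
  then show ?thesis using lam_card[OF ij] deg_card[OF ij(1)] by simp
qed

lemma r_lt_K: "r < K"
proof -
  have "K - r > 0"
  proof (rule ccontr)
    assume a: "\<not> K - r > 0"
    have "K - s > 0" using s_neg by simp
    then have "(K - r) * (K - s) \<le> 0" using a by (simp add: mult_nonpos_nonneg)
    moreover have "M * V > 0" using M_pos V_pos by simp
    ultimately show False using pK by simp
  qed
  then show ?thesis by simp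
qed

lemma s_gt_mK: "- K < s"
proof -
  have "(K + r) * (K + s) = K * K + K * (r + s) + r * s" by (simp add: algebra_simps)
  then have p: "(K + r) * (K + s) = K * (K + L - M - 1) + M" unfolding rs_sum rs_prod by (simp add: algebra_simps)
  have "K + L - M - 1 \<ge> 0" using mu_lt_k by simp
  then have "K * (K + L - M - 1) \<ge> 0" by simp
  then have pos: "(K + r) * (K + s) > 0" using p M_pos by simp
  have "K + r > 0" using r_pos by simp
  show ?thesis
  proof (rule ccontr)
    assume "\<not> - K < s" then have "K + s \<le> 0" by simp
    then have "(K + r) * (K + s) \<le> 0" using \<open>K + r > 0\<close> by (simp add: mult_nonneg_nonpos)
    then show False using pos by simp
  qed
qed

lemma r_ne_m1: "r \<noteq> -1" and s_ne_m1: "s \<noteq> -1"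
proof -
  have ne: "L \<noteq> K - 1"
  proof
    assume "L = K - 1"
    then have "L * K = (K - 1) * K" by simp
    then have "L * K = K * K - K" by (simp add: algebra_simps)
    moreover from count_id have "M * (V - 1 - K) = K * K - K - L * K" by linarith
    ultimately have "M * (V - 1 - K) = 0" by linarith
    then show False using M_pos V_ge by simp
  qed
  show "r \<noteq> -1" using r_eq ne by (auto simp: power2_eq_square)
  show "s \<noteq> -1" using s_eq ne by (auto simp: power2_eq_square)
qed

lemma r_ne_K: "r \<noteq> K" using r_lt_K by simp
lemma s_ne_K: "s \<noteq> K" using s_neg by simp

end

context srgp begin

definition dl :: "nat \<Rightarrow> nat \<Rightarrow> real" where "dl i j = (if i = j then 1 else 0)"
definition bm :: "real \<Rightarrow> real \<Rightarrow> real \<Rightarrow> nat \<Rightarrow> nat \<Rightarrow> real" where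
  "bm x y z i j = x * dl i j + y * adj i j + z"

definition "pX x y z x' y' z' = x*x' + y*y'*(K-M)"
definition "pY x y z x' y' z' = x*y' + y*x' + y*y'*(L-M)"
definition "pZ x y z x' y' z' = x*z' + z*x' + (y*z' + z*y')*K + z*z'*V + y*y'*M"

lemma s_dl: assumes "i < v" shows "(\<Sum>l<v. dl i l * f l) = f i"
proof -
  have "(\<Sum>l<v. dl i l * f l) = (\<Sum>l<v. if l = i then f i else 0)"
    by (rule sum.cong, auto simp: dl_def)
  then show ?thesis using assms by simp
qed
lemma s_dl': assumes "j < v" shows "(\<Sum>l<v. f l * dl l j) = f j"
proof -
  have "(\<Sum>l<v. f l * dl l j) = (\<Sum>l<v. if l = j then f j else 0)"
    by (rule sum.cong, auto simp: dl_def)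
  then show ?thesis using assms by simp
qed
lemma s_dd: "i < v \<Longrightarrow> (\<Sum>l<v. dl i l * dl l j) = dl i j" by (rule s_dl)
lemma s_da: "i < v \<Longrightarrow> (\<Sum>l<v. dl i l * adj l j) = adj i j" by (rule s_dl)
lemma s_d1: "i < v \<Longrightarrow> (\<Sum>l<v. dl i l) = 1" using s_dl[of i "\<lambda>_. 1"] by simp
lemma s_ad: "j < v \<Longrightarrow> (\<Sum>l<v. adj i l * dl l j) = adj i j" by (rule s_dl')
lemma s_1d: "j < v \<Longrightarrow> (\<Sum>l<v. dl l j) = 1" using s_dl'[of j "\<lambda>_. 1"] by simp
lemma s_aa: "i < v \<Longrightarrow> j < v \<Longrightarrow> (\<Sum>l<v. adj i l * adj l j) = (K - M) * dl i j + (L - M) * adj i j + M"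
  using cn_sum irrefl by (auto simp: dl_def adj_def)

lemma bm_mult: assumes i: "i < v" and j: "j < v"
  shows "(\<Sum>l<v. bm x y z i l * bm x' y' z' l j) = bm (pX x y z x' y' z') (pY x y z x' y' z') (pZ x y z x' y' z') i j"
proof -
  have "(\<Sum>l<v. bm x y z i l * bm x' y' z' l j) = (\<Sum>l<v. x*x' * (dl i l * dl l j) + x*y' * (dl i l * adj l j) + x*z' * dl i l
     + y*x' * (adj i l * dl l j) + y*y' * (adj i l * adj l j) + y*z' * adj i l + z*x' * dl l j + z*y' * adj l j + z*z')"
    by (rule sum.cong, simp, simp add: bm_def algebra_simps)
  also have "\<dots> = x*x' * (\<Sum>l<v. dl i l * dl l j) + x*y' * (\<Sum>l<v. dl i l * adj l j) + x*z' * (\<Sum>l<v. dl i l)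
     + y*x' * (\<Sum>l<v. adj i l * dl l j) + y*y' * (\<Sum>l<v. adj i l * adj l j) + y*z' * (\<Sum>l<v. adj i l) + z*x' * (\<Sum>l<v. dl l j) + z*y' * (\<Sum>l<v. adj l j) + z*z' * V"
    by (simp add: sum.distrib sum_distrib_left)
  also have "\<dots> = x*x' * dl i j + x*y' * adj i j + x*z' + y*x' * adj i j + y*y' * ((K - M) * dl i j + (L - M) * adj i j + M)
     + y*z' * K + z*x' + z*y' * K + z*z' * V"
    using i j by (simp add: s_dd s_da s_d1 s_ad s_1d s_aa deg_sum deg_sum')
  also have "\<dots> = bm (pX x y z x' y' z') (pY x y z x' y' z') (pZ x y z x' y' z') i j"
    by (simp add: bm_def pX_def pY_def pZ_def algebra_simps)
  finally show ?thesis .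
qed

definition chi :: "real \<Rightarrow> real \<Rightarrow> real \<Rightarrow> real \<Rightarrow> real" where "chi t x y z = x + y * t"
definition chik :: "real \<Rightarrow> real \<Rightarrow> real \<Rightarrow> real" where "chik x y z = x + y * K + z * V"

lemma chi_mult: assumes t: "t^2 = (L - M) * t + (K - M)"
  shows "chi t (pX x y z x' y' z') (pY x y z x' y' z') (pZ x y z x' y' z') = chi t x y z * chi t x' y' z'"
proof -
  have "chi t x y z * chi t x' y' z' = x*x' + (x*y' + y*x') * t + y*y' * t^2"
    by (simp add: chi_def power2_eq_square algebra_simps)
  also have "\<dots> = chi t (pX x y z x' y' z') (pY x y z x' y' z') (pZ x y z x' y' z')"
    unfolding t by (simp add: chi_def pX_def pY_def algebra_simps)
  finally show ?thesis by simp
qed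

lemma chik_mult:
  shows "chik (pX x y z x' y' z') (pY x y z x' y' z') (pZ x y z x' y' z') = chik x y z * chik x' y' z'"
proof -
  have kk: "K * K = (K - M) + (L - M) * K + M * V" using count_id by (simp add: algebra_simps)
  have "chik x y z * chik x' y' z' = x*x' + (x*y' + y*x') * K + y*y' * (K * K) + (x*z'+z*x')*V + (y*z'+z*y')*K*V + z*z'*V*V"
    by (simp add: chik_def algebra_simps)
  also have "\<dots> = chik (pX x y z x' y' z') (pY x y z x' y' z') (pZ x y z x' y' z')"
    unfolding kk by (simp add: chik_def pX_def pY_def pZ_def algebra_simps)
  finally show ?thesis by simp
qed

lemma chi_inj: assumes "chi r x y z = chi r x' y' z'" "chi s x y z = chi s x' y' z'" "chik x y z = chik x' y' z'"
  shows "x = x'" "y = y'" "z = z'"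
proof -
  from assms(1,2) have "(y - y') * (r - s) = 0" by (simp add: chi_def algebra_simps)
  then show yy: "y = y'" using r_gt_s by simp
  then show xx: "x = x'" using assms(1) by (simp add: chi_def)
  from assms(3) xx yy have "z * V = z' * V" by (simp add: chik_def)
  then show "z = z'" using V_pos by simp
qed

lemma bm_eq: assumes "chi r x y z = chi r x' y' z'" "chi s x y z = chi s x' y' z'" "chik x y z = chik x' y' z'"
  shows "bm x y z i j = bm x' y' z' i j"
  using chi_inj[OF assms] by simp

lemma bm_sym: "i < v \<Longrightarrow> j < v \<Longrightarrow> bm x y z i j = bm x y z j i"
  by (simp add: bm_def dl_def adj_def symE)

lemma bm_nonzero: assumes "\<forall>i<v. \<forall>j<v. bm x y z i j = 0" shows "x = 0" "y = 0" "z = 0"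
proof -
  obtain i j where ij: "i < v" "j < v" "i \<noteq> j" "\<not> E i j" using noncomplete by blast
  obtain i' j' where ij': "i' < v" "j' < v" "E i' j'" using nonempty_edge by blast
  have "bm x y z i j = 0" using assms ij by blast
  then have z: "z = 0" using ij by (simp add: bm_def dl_def adj_def)
  then show "z = 0" .
  have "i' \<noteq> j'" using ij' irrefl by auto
  moreover have "bm x y z i' j' = 0" using assms ij' by blast
  ultimately show y: "y = 0" using ij' z by (simp add: bm_def dl_def adj_def)
  have "bm x y z i i = 0" using assms ij by blast
  then show "x = 0" using ij z y by (simp add: bm_def dl_def adj_def)
qed

definition "pair t t' \<longleftrightarrow> (t = r \<and> t' = s) \<or> (t = s \<and> t' = r)"

lemma pair_props: assumes "pair t t'"
  shows "t^2 = (L - M) * t + (K - M)" "t'^2 = (L - M) * t' + (K - M)" "t \<noteq> t'" "t + t' = L - M" "t * t' = M - K"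
    "t' \<noteq> 0" "t' \<noteq> -1" "t \<noteq> K" "t' \<noteq> K" "\<bar>t\<bar> < K"
  using assms r_eq s_eq r_gt_s rs_sum rs_prod r_pos s_neg r_ne_m1 s_ne_m1 r_ne_K s_ne_K r_lt_K s_gt_mK
  unfolding pair_def by (auto simp: algebra_simps)

definition "ex t t' = - t' / (t - t')"
definition "ey t t' = 1 / (t - t')"
definition "ez t t' = - (K - t') / ((t - t') * V)"

lemma proj_chi: assumes "pair t t'"
  shows "chi t (ex t t') (ey t t') (ez t t') = 1" "chi t' (ex t t') (ey t t') (ez t t') = 0"
    "chik (ex t t') (ey t t') (ez t t') = 0"
proof -
  have ne: "t - t' \<noteq> 0" using pair_props[OF assms] by simp
  have "chi t (ex t t') (ey t t') (ez t t') = t / (t - t') - t' / (t - t')"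
    by (simp add: chi_def ex_def ey_def)
  also have "\<dots> = (t - t') / (t - t')" by (simp only: diff_divide_distrib)
  also have "\<dots> = 1" using ne by (rule divide_self)
  finally show "chi t (ex t t') (ey t t') (ez t t') = 1" .
  show "chi t' (ex t t') (ey t t') (ez t t') = 0" by (simp add: chi_def ex_def ey_def)
  have "ez t t' * V = - (K - t') / (t - t')" using V_pos by (simp add: ez_def)
  then have "chik (ex t t') (ey t t') (ez t t') = (K - t') / (t - t') - (K - t') / (t - t')"
    by (simp add: chik_def ex_def ey_def diff_divide_distrib)
  then show "chik (ex t t') (ey t t') (ez t t') = 0" by simp
qed

end

lemma cs_sum:
  fixes a :: "'a \<Rightarrow> real"
  shows "(\<Sum>i\<in>I. a i * b i)\<^sup>2 \<le> (\<Sum>i\<in>I. (a i)\<^sup>2) * (\<Sum>i\<in>I. (b i)\<^sup>2)"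
proof (cases "(\<Sum>i\<in>I. (b i)\<^sup>2) > 0")
  case False
  have nn: "(\<Sum>i\<in>I. (b i)\<^sup>2) \<ge> 0" by (rule sum_nonneg) simp
  then have z: "(\<Sum>i\<in>I. (b i)\<^sup>2) = 0" using False by linarith
  show ?thesis
  proof (cases "finite I")
    case True
    then have "\<forall>i\<in>I. (b i)\<^sup>2 = 0" using z by (subst sum_nonneg_eq_0_iff[symmetric]) auto
    then have "(\<Sum>i\<in>I. a i * b i) = 0" by (intro sum.neutral) simp
    then show ?thesis using z by simp
  next
    case False then show ?thesis by simp
  qed
next
  case True
  define A where "A = (\<Sum>i\<in>I. (a i)\<^sup>2)"
  define B where "B = (\<Sum>i\<in>I. (b i)\<^sup>2)"
  define S where "S = (\<Sum>i\<in>I. a i * b i)"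
  define r where "r = S / B"
  have B: "B > 0" using True unfolding B_def .
  have "(\<Sum>i\<in>I. (a i - r * b i)\<^sup>2) = (\<Sum>i\<in>I. (a i)\<^sup>2 - 2 * r * (a i * b i) + r\<^sup>2 * (b i)\<^sup>2)"
    by (rule sum.cong) (simp_all add: power2_diff power_mult_distrib mult_ac)
  also have "\<dots> = A - 2 * r * S + r\<^sup>2 * B"
    unfolding A_def B_def S_def by (simp add: sum.distrib sum_subtractf sum_distrib_left)
  finally have e: "(\<Sum>i\<in>I. (a i - r * b i)\<^sup>2) = A - 2 * r * S + r\<^sup>2 * B" .
  have "0 \<le> (\<Sum>i\<in>I. (a i - r * b i)\<^sup>2)" by (rule sum_nonneg) simp
  then have "0 \<le> A - 2 * r * S + r\<^sup>2 * B" unfolding e .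
  also have "A - 2 * r * S + r\<^sup>2 * B = A - S\<^sup>2 / B"
    unfolding r_def using B by (simp add: power2_eq_square field_simps)
  finally have "S\<^sup>2 / B \<le> A" by simp
  then have "S\<^sup>2 \<le> A * B" using B by (simp add: pos_divide_le_eq)
  then show ?thesis unfolding A_def B_def S_def .
qed

lemma cs_sum2:
  fixes a :: "'a \<Rightarrow> 'a \<Rightarrow> real"
  assumes "finite I"
  shows "(\<Sum>i\<in>I. \<Sum>j\<in>I. a i j * b i j)\<^sup>2 \<le> (\<Sum>i\<in>I. \<Sum>j\<in>I. (a i j)\<^sup>2) * (\<Sum>i\<in>I. \<Sum>j\<in>I. (b i j)\<^sup>2)"
  using cs_sum[of "\<lambda>p. a (fst p) (snd p)" "\<lambda>p. b (fst p) (snd p)" "I \<times> I"]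
  by (simp add: sum.cartesian_product split_def)

lemma dim_bound:
  fixes Pi :: "'i \<Rightarrow> 'i \<Rightarrow> real" and Y :: "nat \<Rightarrow> 'i \<Rightarrow> real" and H :: "nat \<Rightarrow> nat \<Rightarrow> real"
    and n :: nat and T :: real
  assumes fin: "finite I"
  and PY: "\<And>j \<beta>. j < n \<Longrightarrow> \<beta> \<in> I \<Longrightarrow> (\<Sum>\<alpha>\<in>I. Pi \<alpha> \<beta> * Y j \<alpha>) = Y j \<beta>"
  and PT: "(\<Sum>\<alpha>\<in>I. \<Sum>\<beta>\<in>I. (Pi \<alpha> \<beta>)\<^sup>2) \<le> T"
  and Hs: "\<And>i j. i < n \<Longrightarrow> j < n \<Longrightarrow> H i j = H j i"
  and GH: "\<And>i l. i < n \<Longrightarrow> l < n \<Longrightarrow> (\<Sum>j<n. (\<Sum>\<alpha>\<in>I. Y i \<alpha> * Y j \<alpha>) * H j l) = (if i = l then 1 else 0)"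
  and npos: "n > 0"
  shows "real n \<le> T"
proof -
  define G where "G i j = (\<Sum>\<alpha>\<in>I. Y i \<alpha> * Y j \<alpha>)" for i j
  define z where "z i \<beta> = (\<Sum>j<n. H i j * Y j \<beta>)" for i \<beta>
  define Q where "Q \<alpha> \<beta> = (\<Sum>i<n. Y i \<alpha> * z i \<beta>)" for \<alpha> \<beta>
  have Gs: "G i j = G j i" for i j unfolding G_def by (simp add: mult.commute)
  have d1: "(\<Sum>\<beta>\<in>I. Y i \<beta> * z l \<beta>) = (if i = l then 1 else 0)" if il: "i < n" "l < n" for i l
  proof -
    have "(\<Sum>\<beta>\<in>I. Y i \<beta> * z l \<beta>) = (\<Sum>\<beta>\<in>I. \<Sum>j<n. H l j * (Y i \<beta> * Y j \<beta>))"
      unfolding z_def by (simp add: sum_distrib_left mult_ac)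
    also have "\<dots> = (\<Sum>j<n. \<Sum>\<beta>\<in>I. H l j * (Y i \<beta> * Y j \<beta>))" by (rule sum.swap)
    also have "\<dots> = (\<Sum>j<n. G i j * H j l)"
      by (rule sum.cong, simp, simp add: G_def sum_distrib_left[symmetric] Hs[OF il(2)] mult.commute)
    finally show ?thesis using GH[OF il] unfolding G_def by simp
  qed
  have zz: "(\<Sum>\<beta>\<in>I. z i \<beta> * z k \<beta>) = H i k" if ik: "i < n" "k < n" for i k
  proof -
    have "(\<Sum>\<beta>\<in>I. z i \<beta> * z k \<beta>) = (\<Sum>\<beta>\<in>I. \<Sum>j<n. H k j * (Y j \<beta> * z i \<beta>))"
      unfolding z_def[of k] by (simp add: sum_distrib_left sum_distrib_right mult_ac)
    also have "\<dots> = (\<Sum>j<n. \<Sum>\<beta>\<in>I. H k j * (Y j \<beta> * z i \<beta>))" by (rule sum.swap)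
    also have "\<dots> = (\<Sum>j<n. H k j * (if j = i then 1 else 0))"
      by (rule sum.cong, simp, simp add: sum_distrib_left[symmetric] d1 ik)
    also have "\<dots> = H k i" using ik by (simp add: if_distrib cong: if_cong)
    finally show ?thesis using Hs ik by simp
  qed
  have S1: "(\<Sum>\<alpha>\<in>I. \<Sum>\<beta>\<in>I. Pi \<alpha> \<beta> * Q \<alpha> \<beta>) = real n"
  proof -
    have "(\<Sum>\<alpha>\<in>I. \<Sum>\<beta>\<in>I. Pi \<alpha> \<beta> * Q \<alpha> \<beta>) = (\<Sum>\<alpha>\<in>I. \<Sum>\<beta>\<in>I. \<Sum>i<n. Pi \<alpha> \<beta> * Y i \<alpha> * z i \<beta>)"
      unfolding Q_def by (simp add: sum_distrib_left mult_ac)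
    also have "\<dots> = (\<Sum>\<beta>\<in>I. \<Sum>\<alpha>\<in>I. \<Sum>i<n. Pi \<alpha> \<beta> * Y i \<alpha> * z i \<beta>)" by (rule sum.swap)
    also have "\<dots> = (\<Sum>\<beta>\<in>I. \<Sum>i<n. \<Sum>\<alpha>\<in>I. Pi \<alpha> \<beta> * Y i \<alpha> * z i \<beta>)" by (rule sum.cong, simp, rule sum.swap)
    also have "\<dots> = (\<Sum>\<beta>\<in>I. \<Sum>i<n. Y i \<beta> * z i \<beta>)"
      by (rule sum.cong, simp, rule sum.cong, simp, simp add: sum_distrib_right[symmetric] PY)
    also have "\<dots> = (\<Sum>i<n. \<Sum>\<beta>\<in>I. Y i \<beta> * z i \<beta>)" by (rule sum.swap)
    also have "\<dots> = (\<Sum>i<n. 1)" by (rule sum.cong, simp, simp add: d1)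
    finally show ?thesis by simp
  qed
  have S2: "(\<Sum>\<alpha>\<in>I. \<Sum>\<beta>\<in>I. (Q \<alpha> \<beta>)\<^sup>2) = real n"
  proof -
    have "(\<Sum>\<alpha>\<in>I. \<Sum>\<beta>\<in>I. (Q \<alpha> \<beta>)\<^sup>2) = (\<Sum>\<alpha>\<in>I. \<Sum>\<beta>\<in>I. \<Sum>i<n. \<Sum>k<n. (Y i \<alpha> * Y k \<alpha>) * (z i \<beta> * z k \<beta>))"
      unfolding Q_def power2_eq_square by (simp add: sum_distrib_left sum_distrib_right mult_ac)
    also have "\<dots> = (\<Sum>\<alpha>\<in>I. \<Sum>i<n. \<Sum>k<n. \<Sum>\<beta>\<in>I. (Y i \<alpha> * Y k \<alpha>) * (z i \<beta> * z k \<beta>))"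
      by (rule sum.cong, simp, subst sum.swap, rule sum.cong, simp, rule sum.swap)
    also have "\<dots> = (\<Sum>\<alpha>\<in>I. \<Sum>i<n. \<Sum>k<n. (Y i \<alpha> * Y k \<alpha>) * H i k)"
      by (intro sum.cong refl, simp add: sum_distrib_left[symmetric] zz)
    also have "\<dots> = (\<Sum>i<n. \<Sum>k<n. \<Sum>\<alpha>\<in>I. (Y i \<alpha> * Y k \<alpha>) * H i k)"
      by (subst sum.swap, rule sum.cong, simp, rule sum.swap)
    also have "\<dots> = (\<Sum>i<n. \<Sum>k<n. G i k * H k i)"
      by (intro sum.cong refl, simp add: G_def sum_distrib_right[symmetric] Hs)
    also have "\<dots> = (\<Sum>i<n. 1)"
      by (rule sum.cong, simp, simp add: GH[unfolded G_def[symmetric]])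
    finally show ?thesis by simp
  qed
  have "(real n)\<^sup>2 \<le> (\<Sum>\<alpha>\<in>I. \<Sum>\<beta>\<in>I. (Pi \<alpha> \<beta>)\<^sup>2) * real n"
    using cs_sum2[OF fin, of Pi Q] unfolding S1 S2 .
  also have "\<dots> \<le> T * real n" using PT by (simp add: mult_right_mono)
  finally have "real n * real n \<le> T * real n" by (simp add: power2_eq_square)
  then show ?thesis using npos by simp
qed

definition symt :: "('a \<Rightarrow> real) \<Rightarrow> ('a \<Rightarrow> real) \<Rightarrow> 'a \<times> 'a \<Rightarrow> real" where
  "symt f g \<alpha> = (f (fst \<alpha>) * g (snd \<alpha>) + g (fst \<alpha>) * f (snd \<alpha>)) / 2"

definition PiF :: "('a \<Rightarrow> 'a \<Rightarrow> real) \<Rightarrow> 'a \<times> 'a \<Rightarrow> 'a \<times> 'a \<Rightarrow> real" where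
  "PiF F \<alpha> \<beta> = (F (fst \<alpha>) (fst \<beta>) * F (snd \<alpha>) (snd \<beta>) + F (fst \<alpha>) (snd \<beta>) * F (snd \<alpha>) (fst \<beta>)) / 2"

lemma sep: "finite A \<Longrightarrow> (\<Sum>\<alpha>\<in>A \<times> A. f (fst \<alpha>) * g (snd \<alpha>)) = (\<Sum>a\<in>A. f a) * (\<Sum>b\<in>A. g b :: real)"
proof -
  assume "finite A"
  have "(\<Sum>\<alpha>\<in>A \<times> A. f (fst \<alpha>) * g (snd \<alpha>)) = (\<Sum>a\<in>A. \<Sum>b\<in>A. f a * g b)"
    by (subst sum.cartesian_product) (simp add: split_def)
  also have "\<dots> = (\<Sum>a\<in>A. f a) * (\<Sum>b\<in>A. g b)" by (rule sum_product[symmetric])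
  finally show ?thesis .
qed

lemma proj_sym:
  assumes fin: "finite A" and c: "c \<in> A" and d: "d \<in> A"
    and Ff: "\<And>c. c \<in> A \<Longrightarrow> (\<Sum>a\<in>A. F a c * f a) = f c"
    and Fg: "\<And>c. c \<in> A \<Longrightarrow> (\<Sum>a\<in>A. F a c * g a) = g c"
  shows "(\<Sum>\<alpha>\<in>A \<times> A. PiF F \<alpha> (c, d) * symt f g \<alpha>) = symt f g (c, d)"
proof -
  have pw: "PiF F \<alpha> (c, d) * symt f g \<alpha> =
     ((F (fst \<alpha>) c * f (fst \<alpha>)) * (F (snd \<alpha>) d * g (snd \<alpha>)) +
     (F (fst \<alpha>) c * g (fst \<alpha>)) * (F (snd \<alpha>) d * f (snd \<alpha>)) +
     (F (fst \<alpha>) d * f (fst \<alpha>)) * (F (snd \<alpha>) c * g (snd \<alpha>)) +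
     (F (fst \<alpha>) d * g (fst \<alpha>)) * (F (snd \<alpha>) c * f (snd \<alpha>))) / 4" for \<alpha>
    unfolding PiF_def symt_def by (simp add: algebra_simps)
  have "(\<Sum>\<alpha>\<in>A \<times> A. PiF F \<alpha> (c, d) * symt f g \<alpha>) =
     ((\<Sum>\<alpha>\<in>A \<times> A. (F (fst \<alpha>) c * f (fst \<alpha>)) * (F (snd \<alpha>) d * g (snd \<alpha>))) +
     (\<Sum>\<alpha>\<in>A \<times> A. (F (fst \<alpha>) c * g (fst \<alpha>)) * (F (snd \<alpha>) d * f (snd \<alpha>))) +
     (\<Sum>\<alpha>\<in>A \<times> A. (F (fst \<alpha>) d * f (fst \<alpha>)) * (F (snd \<alpha>) c * g (snd \<alpha>))) +
     (\<Sum>\<alpha>\<in>A \<times> A. (F (fst \<alpha>) d * g (fst \<alpha>)) * (F (snd \<alpha>) c * f (snd \<alpha>)))) / 4"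
    by (simp only: pw sum_divide_distrib[symmetric] sum.distrib)
  also have "\<dots> = (f c * g d + g c * f d + f d * g c + g d * f c) / 4"
    by (simp only: sep[OF fin, of "\<lambda>a. F a c * f a" "\<lambda>b. F b d * g b"] sep[OF fin, of "\<lambda>a. F a c * g a" "\<lambda>b. F b d * f b"]
      sep[OF fin, of "\<lambda>a. F a d * f a" "\<lambda>b. F b c * g b"] sep[OF fin, of "\<lambda>a. F a d * g a" "\<lambda>b. F b c * f b"] Ff Fg c d)
  also have "\<dots> = symt f g (c, d)" unfolding symt_def by (simp add: algebra_simps)
  finally show ?thesis .
qed

lemma sym_inner:
  assumes fin: "finite A"
  shows "(\<Sum>\<alpha>\<in>A \<times> A. symt f g \<alpha> * symt h l \<alpha>) =
    ((\<Sum>a\<in>A. f a * h a) * (\<Sum>a\<in>A. g a * l a) + (\<Sum>a\<in>A. f a * l a) * (\<Sum>a\<in>A. g a * h a)) / 2"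
proof -
  have pw: "symt f g \<alpha> * symt h l \<alpha> =
     ((f (fst \<alpha>) * h (fst \<alpha>)) * (g (snd \<alpha>) * l (snd \<alpha>)) +
     (f (fst \<alpha>) * l (fst \<alpha>)) * (g (snd \<alpha>) * h (snd \<alpha>)) +
     (g (fst \<alpha>) * h (fst \<alpha>)) * (f (snd \<alpha>) * l (snd \<alpha>)) +
     (g (fst \<alpha>) * l (fst \<alpha>)) * (f (snd \<alpha>) * h (snd \<alpha>))) / 4" for \<alpha>
    unfolding symt_def by (simp add: algebra_simps)
  have "(\<Sum>\<alpha>\<in>A \<times> A. symt f g \<alpha> * symt h l \<alpha>) =
     ((\<Sum>\<alpha>\<in>A \<times> A. (f (fst \<alpha>) * h (fst \<alpha>)) * (g (snd \<alpha>) * l (snd \<alpha>))) +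
     (\<Sum>\<alpha>\<in>A \<times> A. (f (fst \<alpha>) * l (fst \<alpha>)) * (g (snd \<alpha>) * h (snd \<alpha>))) +
     (\<Sum>\<alpha>\<in>A \<times> A. (g (fst \<alpha>) * h (fst \<alpha>)) * (f (snd \<alpha>) * l (snd \<alpha>))) +
     (\<Sum>\<alpha>\<in>A \<times> A. (g (fst \<alpha>) * l (fst \<alpha>)) * (f (snd \<alpha>) * h (snd \<alpha>)))) / 4"
    by (simp only: pw sum_divide_distrib[symmetric] sum.distrib)
  also have "\<dots> = ((\<Sum>a\<in>A. f a * h a) * (\<Sum>a\<in>A. g a * l a) + (\<Sum>a\<in>A. f a * l a) * (\<Sum>a\<in>A. g a * h a)
     + (\<Sum>a\<in>A. g a * h a) * (\<Sum>a\<in>A. f a * l a) + (\<Sum>a\<in>A. g a * l a) * (\<Sum>a\<in>A. f a * h a)) / 4"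
    by (simp only: sep[OF fin, of "\<lambda>a. f a * h a" "\<lambda>b. g b * l b"] sep[OF fin, of "\<lambda>a. f a * l a" "\<lambda>b. g b * h b"]
      sep[OF fin, of "\<lambda>a. g a * h a" "\<lambda>b. f b * l b"] sep[OF fin, of "\<lambda>a. g a * l a" "\<lambda>b. f b * h b"])
  also have "\<dots> = ((\<Sum>a\<in>A. f a * h a) * (\<Sum>a\<in>A. g a * l a) + (\<Sum>a\<in>A. f a * l a) * (\<Sum>a\<in>A. g a * h a)) / 2"
    by (simp add: algebra_simps)
  finally show ?thesis .
qed

lemma PiF_sq:
  assumes fin: "finite A"
    and Fs: "\<And>a b. a \<in> A \<Longrightarrow> b \<in> A \<Longrightarrow> F a b = F b a"
    and Fi: "\<And>a b. a \<in> A \<Longrightarrow> b \<in> A \<Longrightarrow> (\<Sum>c\<in>A. F a c * F c b) = F a b"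
  shows "(\<Sum>\<alpha>\<in>A \<times> A. \<Sum>\<beta>\<in>A \<times> A. (PiF F \<alpha> \<beta>)\<^sup>2) = ((\<Sum>a\<in>A. F a a)\<^sup>2 + (\<Sum>a\<in>A. F a a)) / 2"
proof -
  let ?T = "\<Sum>a\<in>A. F a a"
  have Fi2: "(\<Sum>c\<in>A. F a c * F b c) = F a b" if "a \<in> A" "b \<in> A" for a b
    using Fi[OF that] that by (metis (no_types, lifting) Fs sum.cong)
  have dg: "(\<Sum>c\<in>A. F a c * F a c) = F a a" if "a \<in> A" for a using Fi2[OF that that] .
  have sq: "(\<Sum>a\<in>A. \<Sum>b\<in>A. F a b * F a b) = ?T" by (rule sum.cong, simp, rule dg)
  define X where "X \<alpha> \<beta> = F (fst \<alpha>) (fst \<beta>) * F (snd \<alpha>) (snd \<beta>)" for \<alpha> \<beta> :: "'a \<times> 'a"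
  define Y where "Y \<alpha> \<beta> = F (fst \<alpha>) (snd \<beta>) * F (snd \<alpha>) (fst \<beta>)" for \<alpha> \<beta> :: "'a \<times> 'a"
  have t1: "(\<Sum>\<alpha>\<in>A \<times> A. \<Sum>\<beta>\<in>A \<times> A. X \<alpha> \<beta> * X \<alpha> \<beta>) = ?T * ?T"
  proof -
    have "(\<Sum>\<alpha>\<in>A \<times> A. \<Sum>\<beta>\<in>A \<times> A. X \<alpha> \<beta> * X \<alpha> \<beta>)
      = (\<Sum>\<alpha>\<in>A \<times> A. \<Sum>\<beta>\<in>A \<times> A. (F (fst \<alpha>) (fst \<beta>) * F (fst \<alpha>) (fst \<beta>)) * (F (snd \<alpha>) (snd \<beta>) * F (snd \<alpha>) (snd \<beta>)))"
      by (intro sum.cong refl) (simp add: X_def mult_ac)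
    also have "\<dots> = (\<Sum>\<alpha>\<in>A \<times> A. (\<Sum>c\<in>A. F (fst \<alpha>) c * F (fst \<alpha>) c) * (\<Sum>d\<in>A. F (snd \<alpha>) d * F (snd \<alpha>) d))"
      by (rule sum.cong[OF refl], rule sep[OF fin])
    also have "\<dots> = (\<Sum>\<alpha>\<in>A \<times> A. F (fst \<alpha>) (fst \<alpha>) * F (snd \<alpha>) (snd \<alpha>))"
      by (rule sum.cong, simp, auto simp: dg)
    also have "\<dots> = ?T * ?T" by (rule sep[OF fin])
    finally show ?thesis .
  qed
  have t3: "(\<Sum>\<alpha>\<in>A \<times> A. \<Sum>\<beta>\<in>A \<times> A. Y \<alpha> \<beta> * Y \<alpha> \<beta>) = ?T * ?T"
  proof -
    have "(\<Sum>\<alpha>\<in>A \<times> A. \<Sum>\<beta>\<in>A \<times> A. Y \<alpha> \<beta> * Y \<alpha> \<beta>)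
      = (\<Sum>\<alpha>\<in>A \<times> A. \<Sum>\<beta>\<in>A \<times> A. (F (snd \<alpha>) (fst \<beta>) * F (snd \<alpha>) (fst \<beta>)) * (F (fst \<alpha>) (snd \<beta>) * F (fst \<alpha>) (snd \<beta>)))"
      by (intro sum.cong refl) (simp add: Y_def mult_ac)
    also have "\<dots> = (\<Sum>\<alpha>\<in>A \<times> A. (\<Sum>c\<in>A. F (snd \<alpha>) c * F (snd \<alpha>) c) * (\<Sum>d\<in>A. F (fst \<alpha>) d * F (fst \<alpha>) d))"
      by (rule sum.cong[OF refl], rule sep[OF fin])
    also have "\<dots> = (\<Sum>\<alpha>\<in>A \<times> A. F (fst \<alpha>) (fst \<alpha>) * F (snd \<alpha>) (snd \<alpha>))"
      by (rule sum.cong, simp, auto simp: dg)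
    also have "\<dots> = ?T * ?T" by (rule sep[OF fin])
    finally show ?thesis .
  qed
  have t2: "(\<Sum>\<alpha>\<in>A \<times> A. \<Sum>\<beta>\<in>A \<times> A. X \<alpha> \<beta> * Y \<alpha> \<beta>) = ?T"
  proof -
    have "(\<Sum>\<alpha>\<in>A \<times> A. \<Sum>\<beta>\<in>A \<times> A. X \<alpha> \<beta> * Y \<alpha> \<beta>)
      = (\<Sum>\<alpha>\<in>A \<times> A. \<Sum>\<beta>\<in>A \<times> A. (F (fst \<alpha>) (fst \<beta>) * F (snd \<alpha>) (fst \<beta>)) * (F (snd \<alpha>) (snd \<beta>) * F (fst \<alpha>) (snd \<beta>)))"
      by (intro sum.cong refl) (simp add: X_def Y_def mult_ac)
    also have "\<dots> = (\<Sum>\<alpha>\<in>A \<times> A. (\<Sum>c\<in>A. F (fst \<alpha>) c * F (snd \<alpha>) c) * (\<Sum>d\<in>A. F (snd \<alpha>) d * F (fst \<alpha>) d))"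
      by (rule sum.cong[OF refl], rule sep[OF fin])
    also have "\<dots> = (\<Sum>\<alpha>\<in>A \<times> A. F (fst \<alpha>) (snd \<alpha>) * F (fst \<alpha>) (snd \<alpha>))"
      by (rule sum.cong, simp, auto simp: Fi2 Fs)
    also have "\<dots> = (\<Sum>a\<in>A. \<Sum>b\<in>A. F a b * F a b)"
      by (subst sum.cartesian_product) (simp add: split_def)
    finally show ?thesis using sq by simp
  qed
  have "(\<Sum>\<alpha>\<in>A \<times> A. \<Sum>\<beta>\<in>A \<times> A. (PiF F \<alpha> \<beta>)\<^sup>2) =
    (\<Sum>\<alpha>\<in>A \<times> A. \<Sum>\<beta>\<in>A \<times> A. (X \<alpha> \<beta> * X \<alpha> \<beta> + Y \<alpha> \<beta> * Y \<alpha> \<beta> + 2 * (X \<alpha> \<beta> * Y \<alpha> \<beta>)) / 4)"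
    by (intro sum.cong refl) (simp add: PiF_def X_def Y_def power2_eq_square algebra_simps)
  also have "\<dots> = ((\<Sum>\<alpha>\<in>A \<times> A. \<Sum>\<beta>\<in>A \<times> A. X \<alpha> \<beta> * X \<alpha> \<beta>) + (\<Sum>\<alpha>\<in>A \<times> A. \<Sum>\<beta>\<in>A \<times> A. Y \<alpha> \<beta> * Y \<alpha> \<beta>)
     + 2 * (\<Sum>\<alpha>\<in>A \<times> A. \<Sum>\<beta>\<in>A \<times> A. X \<alpha> \<beta> * Y \<alpha> \<beta>)) / 4"
    by (simp only: sum.distrib sum_divide_distrib[symmetric] sum_distrib_left)
  also have "\<dots> = (?T * ?T + ?T * ?T + 2 * ?T) / 4" unfolding t1 t2 t3 ..
  also have "\<dots> = (?T\<^sup>2 + ?T) / 2" by (simp add: power2_eq_square)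
  finally show ?thesis .
qed

lemma gram_psd:
  fixes x :: "nat \<Rightarrow> real" and Y :: "nat \<Rightarrow> 'a \<Rightarrow> real"
  assumes fin: "finite A"
  shows "(\<Sum>i<n. \<Sum>j<n. x i * x j * (\<Sum>\<alpha>\<in>A. Y i \<alpha> * Y j \<alpha>)) \<ge> 0"
proof -
  have "(\<Sum>i<n. \<Sum>j<n. x i * x j * (\<Sum>\<alpha>\<in>A. Y i \<alpha> * Y j \<alpha>)) = (\<Sum>i<n. \<Sum>j<n. \<Sum>\<alpha>\<in>A. (x i * Y i \<alpha>) * (x j * Y j \<alpha>))"
    by (simp add: sum_distrib_left mult_ac)
  also have "\<dots> = (\<Sum>i<n. \<Sum>\<alpha>\<in>A. \<Sum>j<n. (x i * Y i \<alpha>) * (x j * Y j \<alpha>))"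
    by (rule sum.cong, simp, rule sum.swap)
  also have "\<dots> = (\<Sum>\<alpha>\<in>A. \<Sum>i<n. \<Sum>j<n. (x i * Y i \<alpha>) * (x j * Y j \<alpha>))"
    by (rule sum.swap)
  also have "\<dots> = (\<Sum>\<alpha>\<in>A. (\<Sum>i<n. x i * Y i \<alpha>)\<^sup>2)"
    unfolding power2_eq_square by (simp add: sum_product)
  also have "\<dots> \<ge> 0" by (simp add: sum_nonneg)
  finally show ?thesis .
qed

context srgp begin

lemma bm_prod:
  assumes i: "i < v" and j: "j < v"
    and cr: "chi r x y z * chi r x' y' z' = chi r a b c"
    and cs: "chi s x y z * chi s x' y' z' = chi s a b c"
    and ck: "chik x y z * chik x' y' z' = chik a b c"
  shows "(\<Sum>l<v. bm x y z i l * bm x' y' z' l j) = bm a b c i j"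
proof -
  have "(\<Sum>l<v. bm x y z i l * bm x' y' z' l j) = bm (pX x y z x' y' z') (pY x y z x' y' z') (pZ x y z x' y' z') i j"
    by (rule bm_mult[OF i j])
  also have "\<dots> = bm a b c i j"
    by (rule bm_eq, simp_all add: chi_mult[OF r_eq] chi_mult[OF s_eq] chik_mult cr cs ck)
  finally show ?thesis .
qed

lemma sum_Kx: "(\<Sum>a\<in>{..v}. f a) = (\<Sum>a<v. f a) + f v"
  by (simp add: lessThan_Suc_atMost[symmetric])

end

locale srgp_pair = srgp +
  fixes t t' :: real
  assumes pr: "pair t t'"
begin

definition "x0 = ex t t'"
definition "y0 = ey t t'"
definition "z0 = ez t t'"
definition "Em i j = bm x0 y0 z0 i j"
definition "e0 = x0 + z0"
definition "e1 = y0 + z0"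
definition "e2 = z0"

lemma chi_vals: "chi r x0 y0 z0 * chi r x0 y0 z0 = chi r x0 y0 z0"
   "chi s x0 y0 z0 * chi s x0 y0 z0 = chi s x0 y0 z0" "chik x0 y0 z0 * chik x0 y0 z0 = chik x0 y0 z0"
  using proj_chi[OF pr] pr unfolding pair_def x0_def y0_def z0_def by auto

lemma Em_idem: "i < v \<Longrightarrow> j < v \<Longrightarrow> (\<Sum>l<v. Em i l * Em l j) = Em i j"
  unfolding Em_def by (rule bm_prod, simp_all add: chi_vals)

lemma Em_sym: "i < v \<Longrightarrow> j < v \<Longrightarrow> Em i j = Em j i" unfolding Em_def by (rule bm_sym)

lemma Em_entry: "i < v \<Longrightarrow> j < v \<Longrightarrow> Em i j = (if i = j then e0 else if E i j then e1 else e2)"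
  unfolding Em_def bm_def dl_def adj_def e0_def e1_def e2_def using irrefl by auto

lemma ipE: "i < v \<Longrightarrow> j < v \<Longrightarrow> (\<Sum>a<v. Em a i * Em a j) = Em i j"
proof -
  assume ij: "i < v" "j < v"
  have "(\<Sum>a<v. Em a i * Em a j) = (\<Sum>a<v. Em i a * Em a j)" by (rule sum.cong, simp, simp add: Em_sym ij)
  then show ?thesis using Em_idem[OF ij] by simp
qed

definition "F2 a b = (if a < v \<and> b < v then Em a b else if a = v \<and> b = v then 1 else 0)"

lemma F2_sym: "F2 a b = F2 b a" unfolding F2_def using Em_sym by auto

lemma F2_idem: assumes a: "a \<in> {..v}" and b: "b \<in> {..v}"
  shows "(\<Sum>c\<in>{..v}. F2 a c * F2 c b) = F2 a b"
proof -
  have "(\<Sum>c\<in>{..v}. F2 a c * F2 c b) = (\<Sum>c<v. F2 a c * F2 c b) + F2 a v * F2 v b" by (rule sum_Kx)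
  moreover have "(\<Sum>c<v. F2 a c * F2 c b) = (if a < v \<and> b < v then Em a b else 0)"
  proof (cases "a < v \<and> b < v")
    case True
    then have "(\<Sum>c<v. F2 a c * F2 c b) = (\<Sum>c<v. Em a c * Em c b)" by (intro sum.cong) (auto simp: F2_def)
    then show ?thesis using Em_idem True by simp
  next
    case False
    then have "(\<Sum>c<v. F2 a c * F2 c b) = (\<Sum>c<v. 0)" by (intro sum.cong) (auto simp: F2_def)
    moreover from False have "(if a < v \<and> b < v then Em a b else 0) = 0" by (rule if_not_P)
    ultimately show ?thesis by simp
  qed
  ultimately have "(\<Sum>c\<in>{..v}. F2 a c * F2 c b) = (if a < v \<and> b < v then Em a b else 0) + F2 a v * F2 v b" by simp
  then show ?thesis using a b unfolding F2_def[of a v] F2_def[of v b] F2_def[of a b] by auto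
qed

lemma F2_fix: assumes f: "\<And>a. a < v \<Longrightarrow> f a = Em a i" and i: "i < v" and c: "c \<in> {..v}"
  shows "(\<Sum>a\<in>{..v}. F2 a c * f a) = f c"
proof -
  have "(\<Sum>a\<in>{..v}. F2 a c * f a) = (\<Sum>a<v. F2 a c * f a) + F2 v c * f v" by (rule sum_Kx)
  moreover have "(\<Sum>a<v. F2 a c * f a) = (if c < v then Em c i else 0)"
  proof (cases "c < v")
    case True
    then have "(\<Sum>a<v. F2 a c * f a) = (\<Sum>a<v. Em a c * Em a i)" by (intro sum.cong) (auto simp: F2_def f)
    then show ?thesis using ipE True i by simp
  next
    case False
    then have "(\<Sum>a<v. F2 a c * f a) = (\<Sum>a<v. 0)" by (intro sum.cong) (auto simp: F2_def)
    then show ?thesis using False by simp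
  qed
  ultimately have "(\<Sum>a\<in>{..v}. F2 a c * f a) = (if c < v then Em c i else 0) + F2 v c * f v" by simp
  then show ?thesis using c f unfolding F2_def[of v c] by auto
qed

lemma ip_ext: assumes f: "\<And>a. a < v \<Longrightarrow> f a = Em a i" and g: "\<And>a. a < v \<Longrightarrow> g a = Em a j"
  and i: "i < v" and j: "j < v"
  shows "(\<Sum>a\<in>{..v}. f a * g a) = Em i j + f v * g v"
proof -
  have "(\<Sum>a\<in>{..v}. f a * g a) = (\<Sum>a<v. f a * g a) + f v * g v" by (rule sum_Kx)
  moreover have "(\<Sum>a<v. f a * g a) = (\<Sum>a<v. Em a i * Em a j)" by (intro sum.cong) (auto simp: f g)
  ultimately show ?thesis using ipE[OF i j] by simp
qed

definition "wv i a = (if a < v then Em a i else 1)"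
definition "pv i a = (if a < v then Em a i else - e1)"
definition "qv i a = (if a < v then Em a i else - e2)"

lemma ips: assumes "i < v" "j < v"
  shows "(\<Sum>a\<in>{..v}. pv i a * pv j a) = Em i j + e1 * e1"
    "(\<Sum>a\<in>{..v}. qv i a * qv j a) = Em i j + e2 * e2"
    "(\<Sum>a\<in>{..v}. pv i a * qv j a) = Em i j + e1 * e2"
    "(\<Sum>a\<in>{..v}. qv i a * pv j a) = Em i j + e1 * e2"
    "(\<Sum>a\<in>{..v}. pv i a * wv j a) = Em i j - e1"
    "(\<Sum>a\<in>{..v}. qv i a * wv j a) = Em i j - e2"
    "(\<Sum>a\<in>{..v}. wv i a * pv j a) = Em i j - e1"
    "(\<Sum>a\<in>{..v}. wv i a * qv j a) = Em i j - e2"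
    "(\<Sum>a\<in>{..v}. wv i a * wv j a) = Em i j + 1"
  by (subst ip_ext[OF _ _ assms], auto simp: pv_def qv_def wv_def)+

end

context srgp_pair begin

definition "cc = (e0 - e1) * (e0 - e2)"
definition "t0 = (if cc > 0 then 1 else -1 :: real)"

lemma cc_ne: "cc \<noteq> 0"
proof -
  have P: "t \<noteq> t'" "t' \<noteq> 0" "t' \<noteq> -1" using pair_props[OF pr] by auto
  then have d: "t - t' \<noteq> 0" by simp
  have "e0 - e1 = - t' / (t - t') - 1 / (t - t')" unfolding e0_def e1_def x0_def y0_def ex_def ey_def
    by simp
  also have "\<dots> = - (t' + 1) / (t - t')" by (simp add: diff_divide_distrib add_divide_distrib)
  moreover have "- (t' + 1) / (t - t') \<noteq> 0" using P d by simp
  moreover have "e0 - e2 = - t' / (t - t')" unfolding e0_def e2_def x0_def ex_def by simp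
  moreover have "- t' / (t - t') \<noteq> 0" using P d by simp
  ultimately show ?thesis unfolding cc_def by simp
qed

lemma tc_pos: "t0 * cc > 0" using cc_ne unfolding t0_def by auto

definition "Ix = {..v} \<times> {..v}"
definition "Av i = symt (pv i) (qv i)"
definition "Bv i = symt (wv i) (wv i)"
definition "Yv i \<alpha> = Av i \<alpha> + t0 * Bv i \<alpha>"

lemma fin_Ix: "finite Ix" unfolding Ix_def by simp

lemma PY: assumes j: "j < v" and \<beta>: "\<beta> \<in> Ix"
  shows "(\<Sum>\<alpha>\<in>Ix. PiF F2 \<alpha> \<beta> * Yv j \<alpha>) = Yv j \<beta>"
proof -
  obtain c d where cd: "\<beta> = (c, d)" "c \<in> {..v}" "d \<in> {..v}" using \<beta> unfolding Ix_def by auto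
  have fp: "\<And>c. c \<in> {..v} \<Longrightarrow> (\<Sum>a\<in>{..v}. F2 a c * pv j a) = pv j c"
    by (rule F2_fix[OF _ j], simp add: pv_def)
  have fq: "\<And>c. c \<in> {..v} \<Longrightarrow> (\<Sum>a\<in>{..v}. F2 a c * qv j a) = qv j c"
    by (rule F2_fix[OF _ j], simp add: qv_def)
  have fw: "\<And>c. c \<in> {..v} \<Longrightarrow> (\<Sum>a\<in>{..v}. F2 a c * wv j a) = wv j c"
    by (rule F2_fix[OF _ j], simp add: wv_def)
  have "(\<Sum>\<alpha>\<in>Ix. PiF F2 \<alpha> \<beta> * Yv j \<alpha>) = (\<Sum>\<alpha>\<in>Ix. PiF F2 \<alpha> (c, d) * Av j \<alpha>) + t0 * (\<Sum>\<alpha>\<in>Ix. PiF F2 \<alpha> (c, d) * Bv j \<alpha>)"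
    unfolding Yv_def cd by (simp add: algebra_simps sum.distrib sum_distrib_left)
  also have "(\<Sum>\<alpha>\<in>Ix. PiF F2 \<alpha> (c, d) * Av j \<alpha>) = Av j (c, d)"
    unfolding Ix_def Av_def by (rule proj_sym[OF _ cd(2,3) fp fq], simp_all)
  also have "(\<Sum>\<alpha>\<in>Ix. PiF F2 \<alpha> (c, d) * Bv j \<alpha>) = Bv j (c, d)"
    unfolding Ix_def Bv_def by (rule proj_sym[OF _ cd(2,3) fw fw], simp_all)
  finally show ?thesis unfolding Yv_def cd by simp
qed

definition "Gm i j = (\<Sum>\<alpha>\<in>Ix. Yv i \<alpha> * Yv j \<alpha>)"
definition "GA i j = (\<Sum>\<alpha>\<in>Ix. Av i \<alpha> * Av j \<alpha>)"
definition "GAB i j = (\<Sum>\<alpha>\<in>Ix. Av i \<alpha> * Bv j \<alpha>)"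
definition "GB i j = (\<Sum>\<alpha>\<in>Ix. Bv i \<alpha> * Bv j \<alpha>)"

lemma Gm_split: "Gm i j = GA i j + t0 * GAB i j + t0 * GAB j i + t0^2 * GB i j"
  unfolding Gm_def GA_def GAB_def GB_def Yv_def power2_eq_square
  by (simp add: algebra_simps sum.distrib sum_distrib_left)

definition "phi x = ((x + e1*e1) * (x + e2*e2) + (x + e1*e2) * (x + e1*e2)) / 2 + 2 * t0 * ((x - e1) * (x - e2)) + t0^2 * ((x + 1) * (x + 1))"

lemma GA_val: "i < v \<Longrightarrow> j < v \<Longrightarrow> GA i j = ((Em i j + e1*e1) * (Em i j + e2*e2) + (Em i j + e1*e2) * (Em i j + e1*e2)) / 2"
  unfolding GA_def Av_def Ix_def by (subst sym_inner, simp, simp add: ips)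
lemma GAB_val: "i < v \<Longrightarrow> j < v \<Longrightarrow> GAB i j = (Em i j - e1) * (Em i j - e2)"
  unfolding GAB_def Av_def Bv_def Ix_def by (subst sym_inner, simp, simp add: ips)
lemma GB_val: "i < v \<Longrightarrow> j < v \<Longrightarrow> GB i j = (Em i j + 1) * (Em i j + 1)"
  unfolding GB_def Bv_def Ix_def by (subst sym_inner, simp, simp add: ips)

lemma Gm_phi: assumes i: "i < v" and j: "j < v" shows "Gm i j = phi (Em i j)"
proof -
  have gji: "GAB j i = (Em i j - e1) * (Em i j - e2)" using GAB_val[OF j i] Em_sym[OF i j] by simp
  show ?thesis unfolding Gm_split phi_def GA_val[OF i j] GAB_val[OF i j] GB_val[OF i j] gji
    by (simp add: algebra_simps)
qed

definition "gx = phi e0 - phi e2"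
definition "gy = phi e1 - phi e2"
definition "gz = phi e2"

lemma Gm_bm: "i < v \<Longrightarrow> j < v \<Longrightarrow> Gm i j = bm gx gy gz i j"
  using Gm_phi Em_entry irrefl unfolding gx_def gy_def gz_def bm_def dl_def adj_def by auto

lemma GAB_dl: "i < v \<Longrightarrow> j < v \<Longrightarrow> GAB i j = cc * dl i j"
  using GAB_val Em_entry unfolding cc_def dl_def by auto

lemma quad_pos: "(\<Sum>i<v. \<Sum>j<v. xv i * xv j * Gm i j) \<ge> 2 * t0 * cc * (\<Sum>i<v. (xv i)\<^sup>2)"
proof -
  have dd: "(\<Sum>i<v. \<Sum>j<v. xv i * xv j * (cc * dl i j)) = cc * (\<Sum>i<v. (xv i)\<^sup>2)"
  proof -
    have "(\<Sum>i<v. \<Sum>j<v. xv i * xv j * (cc * dl i j)) = (\<Sum>i<v. cc * (xv i)\<^sup>2)"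
    proof (rule sum.cong, simp)
      fix i assume "i \<in> {..<v}"
      then have "(\<Sum>j<v. dl i j * (cc * xv i * xv j)) = cc * xv i * xv i" by (intro s_dl) simp
      then show "(\<Sum>j<v. xv i * xv j * (cc * dl i j)) = cc * (xv i)\<^sup>2"
        by (simp add: power2_eq_square mult_ac)
    qed
    then show ?thesis by (simp add: sum_distrib_left)
  qed
  have "(\<Sum>i<v. \<Sum>j<v. xv i * xv j * Gm i j) = (\<Sum>i<v. \<Sum>j<v. xv i * xv j * GA i j)
     + t0 * (\<Sum>i<v. \<Sum>j<v. xv i * xv j * (cc * dl i j)) + t0 * (\<Sum>i<v. \<Sum>j<v. xv i * xv j * (cc * dl i j))
     + t0^2 * (\<Sum>i<v. \<Sum>j<v. xv i * xv j * GB i j)"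
  proof -
    have "(\<Sum>i<v. \<Sum>j<v. xv i * xv j * Gm i j) = (\<Sum>i<v. \<Sum>j<v. xv i * xv j * GA i j
     + t0 * (xv i * xv j * (cc * dl i j)) + t0 * (xv i * xv j * (cc * dl i j))
     + t0^2 * (xv i * xv j * GB i j))"
      by (intro sum.cong refl) (simp add: Gm_split GAB_dl dl_def algebra_simps)
    then show ?thesis by (simp only: sum.distrib sum_distrib_left[symmetric])
  qed
  moreover have "(\<Sum>i<v. \<Sum>j<v. xv i * xv j * GA i j) \<ge> 0"
    unfolding GA_def by (rule gram_psd, simp add: fin_Ix)
  moreover have "(\<Sum>i<v. \<Sum>j<v. xv i * xv j * GB i j) \<ge> 0"
    unfolding GB_def by (rule gram_psd, simp add: fin_Ix)
  ultimately show ?thesis unfolding dd by (simp add: algebra_simps add_nonneg_nonneg)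
qed

end

context srgp_pair begin

lemma chi_scale: "chi u (c*x) (c*y) (c*z) = c * chi u x y z" "chik (c*x) (c*y) (c*z) = c * chik x y z"
  by (simp_all add: chi_def chik_def algebra_simps)

lemma eig_pos:
  assumes cr: "chi r gx gy gz * chi r px py pz = \<gamma> * chi r px py pz"
      and cs: "chi s gx gy gz * chi s px py pz = \<gamma> * chi s px py pz"
      and ck: "chik gx gy gz * chik px py pz = \<gamma> * chik px py pz"
      and nz: "chi r px py pz \<noteq> 0 \<or> chi s px py pz \<noteq> 0 \<or> chik px py pz \<noteq> 0"
  shows "\<gamma> > 0"
proof -
  have "\<exists>i<v. \<exists>j<v. bm px py pz i j \<noteq> 0"
  proof (rule ccontr)
    assume "\<not> (\<exists>i<v. \<exists>j<v. bm px py pz i j \<noteq> 0)"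
    then have "\<forall>i<v. \<forall>j<v. bm px py pz i j = 0" by auto
    from bm_nonzero[OF this] have "px = 0" "py = 0" "pz = 0" by auto
    then show False using nz by (simp add: chi_def chik_def)
  qed
  then obtain i0 j0 where ij0: "i0 < v" "j0 < v" "bm px py pz i0 j0 \<noteq> 0" by blast
  define xv where "xv i = bm px py pz i j0" for i
  have Gx: "(\<Sum>j<v. Gm i j * xv j) = \<gamma> * xv i" if i: "i < v" for i
  proof -
    have "(\<Sum>j<v. Gm i j * xv j) = (\<Sum>j<v. bm gx gy gz i j * bm px py pz j j0)"
      by (rule sum.cong, simp, simp add: Gm_bm i xv_def)
    also have "\<dots> = bm (\<gamma>*px) (\<gamma>*py) (\<gamma>*pz) i j0"
      by (rule bm_prod[OF i ij0(2)], simp_all only: chi_scale cr cs ck)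
    also have "\<dots> = \<gamma> * xv i" by (simp add: bm_def xv_def algebra_simps)
    finally show ?thesis .
  qed
  have "(\<Sum>i<v. \<Sum>j<v. xv i * xv j * Gm i j) = (\<Sum>i<v. xv i * (\<Sum>j<v. Gm i j * xv j))"
    by (rule sum.cong, simp, simp add: sum_distrib_left mult_ac)
  also have "\<dots> = (\<Sum>i<v. \<gamma> * (xv i)\<^sup>2)"
    by (rule sum.cong, simp, subst Gx, simp_all add: power2_eq_square)
  finally have q: "(\<Sum>i<v. \<Sum>j<v. xv i * xv j * Gm i j) = \<gamma> * (\<Sum>i<v. (xv i)\<^sup>2)"
    by (simp add: sum_distrib_left)
  have S: "(\<Sum>i<v. (xv i)\<^sup>2) > 0"
    by (rule sum_pos2[of _ i0], simp, simp add: ij0, simp add: xv_def ij0, simp)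
  have "\<gamma> * (\<Sum>i<v. (xv i)\<^sup>2) \<ge> 2 * t0 * cc * (\<Sum>i<v. (xv i)\<^sup>2)"
    using quad_pos[of xv] q by simp
  moreover have "t0 * cc * (\<Sum>i<v. (xv i)\<^sup>2) > 0" by (rule mult_pos_pos[OF tc_pos S])
  then have "2 * t0 * cc * (\<Sum>i<v. (xv i)\<^sup>2) > 0" by (simp add: mult_ac)
  ultimately have "\<gamma> * (\<Sum>i<v. (xv i)\<^sup>2) > 0" by linarith
  then show ?thesis using S by (simp add: zero_less_mult_iff)
qed

definition "\<gamma>r = chi r gx gy gz"
definition "\<gamma>s = chi s gx gy gz"
definition "\<gamma>k = chik gx gy gz"

lemma pair_rs: "pair r s" and pair_sr: "pair s r" unfolding pair_def by auto

lemma gr_pos: "\<gamma>r > 0"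
  using proj_chi[OF pair_rs] unfolding \<gamma>r_def
  by (intro eig_pos[of "ex r s" "ey r s" "ez r s"]) simp_all
lemma gs_pos: "\<gamma>s > 0"
  using proj_chi[OF pair_sr] unfolding \<gamma>s_def
  by (intro eig_pos[of "ex s r" "ey s r" "ez s r"]) simp_all
lemma gk_pos: "\<gamma>k > 0"
proof -
  have "chik 0 0 (1 / V) = 1" using V_pos by (simp add: chik_def)
  moreover have "chi r 0 0 (1/V) = 0" "chi s 0 0 (1/V) = 0" by (simp_all add: chi_def)
  ultimately show ?thesis unfolding \<gamma>k_def by (intro eig_pos[of 0 0 "1/V"]) simp_all
qed

definition "hy = (1/\<gamma>r - 1/\<gamma>s) / (r - s)"
definition "hx = 1/\<gamma>r - hy * r"
definition "hz = (1/\<gamma>k - hx - hy * K) / V"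

lemma h_chi: "chi r hx hy hz = 1/\<gamma>r" "chi s hx hy hz = 1/\<gamma>s" "chik hx hy hz = 1/\<gamma>k"
proof -
  show "chi r hx hy hz = 1/\<gamma>r" by (simp add: chi_def hx_def)
  have "r - s \<noteq> 0" using r_gt_s by simp
  then have "hy * (r - s) = 1/\<gamma>r - 1/\<gamma>s" unfolding hy_def by simp
  then show "chi s hx hy hz = 1/\<gamma>s" by (simp add: chi_def hx_def algebra_simps)
  have "hz * V = 1/\<gamma>k - hx - hy * K" unfolding hz_def using V_pos by simp
  then show "chik hx hy hz = 1/\<gamma>k" by (simp add: chik_def)
qed

lemma GH: assumes i: "i < v" and l: "l < v"
  shows "(\<Sum>j<v. Gm i j * bm hx hy hz j l) = dl i l"
proof -
  have "(\<Sum>j<v. Gm i j * bm hx hy hz j l) = (\<Sum>j<v. bm gx gy gz i j * bm hx hy hz j l)"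
    by (rule sum.cong, simp, simp add: Gm_bm i)
  also have "\<dots> = bm 1 0 0 i l"
  proof (rule bm_prod[OF i l])
    show "chi r gx gy gz * chi r hx hy hz = chi r 1 0 0"
      using gr_pos unfolding h_chi \<gamma>r_def[symmetric] by (simp add: chi_def)
    show "chi s gx gy gz * chi s hx hy hz = chi s 1 0 0"
      using gs_pos unfolding h_chi \<gamma>s_def[symmetric] by (simp add: chi_def)
    show "chik gx gy gz * chik hx hy hz = chik 1 0 0"
      using gk_pos unfolding h_chi \<gamma>k_def[symmetric] by (simp add: chik_def)
  qed
  also have "\<dots> = dl i l" by (simp add: bm_def)
  finally show ?thesis .
qed

lemma abs_bound: "V \<le> ((V * e0 + 1)\<^sup>2 + (V * e0 + 1)) / 2"
proof -
  have Tr: "(\<Sum>a\<in>{..v}. F2 a a) = V * e0 + 1"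
  proof -
    have "(\<Sum>a\<in>{..v}. F2 a a) = (\<Sum>a<v. F2 a a) + F2 v v" by (rule sum_Kx)
    also have "(\<Sum>a<v. F2 a a) = (\<Sum>a<v. e0)" by (rule sum.cong, simp, simp add: F2_def Em_entry)
    finally show ?thesis by (simp add: F2_def)
  qed
  have "real v \<le> ((\<Sum>a\<in>{..v}. F2 a a)\<^sup>2 + (\<Sum>a\<in>{..v}. F2 a a)) / 2"
  proof (rule dim_bound[where Pi = "PiF F2" and Y = Yv and H = "\<lambda>j l. bm hx hy hz j l" and I = Ix])
    show "finite Ix" by (rule fin_Ix)
    show "\<And>j \<beta>. j < v \<Longrightarrow> \<beta> \<in> Ix \<Longrightarrow> (\<Sum>\<alpha>\<in>Ix. PiF F2 \<alpha> \<beta> * Yv j \<alpha>) = Yv j \<beta>" by (rule PY)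
    show "(\<Sum>\<alpha>\<in>Ix. \<Sum>\<beta>\<in>Ix. (PiF F2 \<alpha> \<beta>)\<^sup>2) \<le> ((\<Sum>a\<in>{..v}. F2 a a)\<^sup>2 + (\<Sum>a\<in>{..v}. F2 a a)) / 2"
    proof -
      have "(\<Sum>\<alpha>\<in>{..v} \<times> {..v}. \<Sum>\<beta>\<in>{..v} \<times> {..v}. (PiF F2 \<alpha> \<beta>)\<^sup>2) = ((\<Sum>a\<in>{..v}. F2 a a)\<^sup>2 + (\<Sum>a\<in>{..v}. F2 a a)) / 2"
        by (rule PiF_sq) (simp, rule F2_sym, rule F2_idem)
      then show ?thesis unfolding Ix_def by simp
    qed
    show "\<And>i j. i < v \<Longrightarrow> j < v \<Longrightarrow> bm hx hy hz i j = bm hx hy hz j i" by (rule bm_sym)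
    show "\<And>i l. i < v \<Longrightarrow> l < v \<Longrightarrow> (\<Sum>j<v. (\<Sum>\<alpha>\<in>Ix. Yv i \<alpha> * Yv j \<alpha>) * bm hx hy hz j l) = (if i = l then 1 else 0)"
      using GH unfolding Gm_def dl_def by simp
    show "0 < v" by (rule v_pos)
  qed
  then show ?thesis unfolding Tr .
qed

end

context srgp begin

definition "Ac = map_mat complex_of_real (adj_matrix v E)"
definition "adjc i j = complex_of_real (adj i j)"

lemma Ac_carrier: "Ac \<in> carrier_mat v v" unfolding Ac_def adj_matrix_def by simp
lemma Ac_entry: "i < v \<Longrightarrow> j < v \<Longrightarrow> Ac $$ (i, j) = adjc i j"
  unfolding Ac_def adj_matrix_def adjc_def adj_def by simp

lemma Ac_mult_vec: assumes x: "x \<in> carrier_vec v" and i: "i < v"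
  shows "(Ac *\<^sub>v x) $ i = (\<Sum>j<v. adjc i j * x $ j)"
proof -
  have "(Ac *\<^sub>v x) $ i = row Ac i \<bullet> x" using i Ac_carrier by simp
  also have "\<dots> = (\<Sum>j\<in>{0..<v}. row Ac i $ j * x $ j)" using x unfolding scalar_prod_def by simp
  also have "\<dots> = (\<Sum>j<v. adjc i j * x $ j)"
  proof (rule sum.cong)
    fix j assume "j \<in> {..<v}"
    then have "row Ac i $ j = Ac $$ (i, j)" using i Ac_carrier by (intro index_row(1)) auto
    then show "row Ac i $ j * x $ j = adjc i j * x $ j" using i \<open>j \<in> {..<v}\<close> by (simp add: Ac_entry)
  qed auto
  finally show ?thesis .
qed

lemma degc: "i < v \<Longrightarrow> (\<Sum>l<v. adjc i l) = complex_of_real K"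
  unfolding adjc_def by (simp add: deg_sum flip: of_real_sum)
lemma degc': "j < v \<Longrightarrow> (\<Sum>l<v. adjc l j) = complex_of_real K"
  unfolding adjc_def by (simp add: deg_sum' flip: of_real_sum)
lemma cnc: "i < v \<Longrightarrow> j < v \<Longrightarrow> (\<Sum>l<v. adjc i l * adjc l j) =
   complex_of_real (K - M) * (if i = j then 1 else 0) + complex_of_real (L - M) * adjc i j + complex_of_real M"
proof -
  assume ij: "i < v" "j < v"
  have "(\<Sum>l<v. adjc i l * adjc l j) = complex_of_real (\<Sum>l<v. adj i l * adj l j)"
    unfolding adjc_def by (simp add: of_real_sum)
  also have "\<dots> = complex_of_real ((K - M) * (if i = j then 1 else 0) + (L - M) * adj i j + M)"
    using cn_sum[OF ij] irrefl ij by (auto simp: adj_def)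
  finally show ?thesis unfolding adjc_def by simp
qed

lemma ev_vals: assumes ev: "eigenvector Ac x e"
  shows "e = complex_of_real K \<or> e = complex_of_real r \<or> e = complex_of_real s"
proof -
  have x: "x \<in> carrier_vec v" and x0: "x \<noteq> 0\<^sub>v v" and Ax: "Ac *\<^sub>v x = e \<cdot>\<^sub>v x"
    using ev Ac_carrier unfolding eigenvector_def by auto
  have A1: "(\<Sum>j<v. adjc i j * x $ j) = e * x $ i" if i: "i < v" for i
    using arg_cong[OF Ax, of "\<lambda>y. y $ i"] Ac_mult_vec[OF x i] x i by simp
  define s1 where "s1 = (\<Sum>j<v. x $ j)"
  have "(\<Sum>i<v. \<Sum>j<v. adjc i j * x $ j) = (\<Sum>j<v. (\<Sum>i<v. adjc i j) * x $ j)"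
    by (subst sum.swap) (simp add: sum_distrib_right)
  also have "\<dots> = (\<Sum>j<v. complex_of_real K * x $ j)" by (rule sum.cong, simp, simp add: degc')
  finally have "(\<Sum>i<v. e * x $ i) = complex_of_real K * s1"
    unfolding s1_def by (simp add: A1 sum_distrib_left)
  then have es1: "e * s1 = complex_of_real K * s1" unfolding s1_def by (simp add: sum_distrib_left)
  have A2: "e * e * x $ i = complex_of_real (K - M) * x $ i + complex_of_real (L - M) * e * x $ i + complex_of_real M * s1"
    if i: "i < v" for i
  proof -
    have "(\<Sum>j<v. adjc i j * (e * x $ j)) = e * (\<Sum>j<v. adjc i j * x $ j)"
      by (simp add: sum_distrib_left mult_ac)
    then have "e * e * x $ i = (\<Sum>j<v. adjc i j * (e * x $ j))"
      using A1[OF i] by simp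
    also have "\<dots> = (\<Sum>j<v. adjc i j * (\<Sum>l<v. adjc j l * x $ l))"
      by (rule sum.cong, simp, simp add: A1)
    also have "\<dots> = (\<Sum>l<v. (\<Sum>j<v. adjc i j * adjc j l) * x $ l)"
      by (simp add: sum_distrib_left sum_distrib_right mult_ac) (rule sum.swap)
    also have "\<dots> = (\<Sum>l<v. complex_of_real (K - M) * ((if i = l then 1 else 0) * x $ l)
        + complex_of_real (L - M) * (adjc i l * x $ l) + complex_of_real M * x $ l)"
      by (rule sum.cong, simp, subst cnc[OF i], simp_all add: algebra_simps)
    also have "\<dots> = complex_of_real (K - M) * (\<Sum>l<v. (if i = l then 1 else 0) * x $ l) + complex_of_real (L - M) * (\<Sum>l<v. adjc i l * x $ l) + complex_of_real M * s1"
      by (simp add: sum.distrib sum_distrib_left s1_def)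
    also have "(\<Sum>l<v. (if i = l then 1 else 0) * x $ l) = x $ i"
    proof -
      have "(\<Sum>l<v. (if i = l then 1 else 0) * x $ l) = (\<Sum>l<v. if l = i then x $ i else 0)" by (rule sum.cong) auto
      then show ?thesis using i by simp
    qed
    also have "(\<Sum>l<v. adjc i l * x $ l) = e * x $ i" by (rule A1[OF i])
    finally show ?thesis by (simp add: mult_ac)
  qed
  show ?thesis
  proof (cases "e = complex_of_real K")
    case True then show ?thesis by simp
  next
    case False
    then have s10: "s1 = 0" using es1 by simp
    obtain i where i: "i < v" "x $ i \<noteq> 0"
      using x x0 by (metis carrier_vecD eq_vecI index_zero_vec(1) index_zero_vec(2))
    have "(e * e - complex_of_real (L - M) * e - complex_of_real (K - M)) * x $ i = 0"
      using A2[OF i(1)] s10 by (simp add: algebra_simps)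
    then have "e * e - complex_of_real (L - M) * e - complex_of_real (K - M) = 0" using i by simp
    moreover have "e * e - complex_of_real (L - M) * e - complex_of_real (K - M) =
      (e - complex_of_real r) * (e - complex_of_real s)"
    proof -
      have "(e - complex_of_real r) * (e - complex_of_real s) = e * e - complex_of_real (r + s) * e + complex_of_real (r * s)"
        by (simp add: algebra_simps)
      then show ?thesis unfolding rs_sum rs_prod by (simp add: algebra_simps)
    qed
    ultimately show ?thesis by simp
  qed
qed

end

definition mtr :: "'a::comm_ring_1 mat \<Rightarrow> nat \<Rightarrow> 'a" where "mtr X n = (\<Sum>i<n. X $$ (i, i))"

lemma mult_entry: assumes "A \<in> carrier_mat n n" "B \<in> carrier_mat n n" "i < n" "j < n"
  shows "(A * B) $$ (i, j) = (\<Sum>l<n. A $$ (i, l) * B $$ (l, j))"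
proof -
  have "(A * B) $$ (i, j) = row A i \<bullet> col B j" using assms by simp
  also have "\<dots> = (\<Sum>l\<in>{0..<n}. row A i $ l * col B j $ l)" using assms unfolding scalar_prod_def by simp
  also have "\<dots> = (\<Sum>l<n. A $$ (i, l) * B $$ (l, j))" using assms by (intro sum.cong) auto
  finally show ?thesis .
qed

lemma mtr_comm: assumes A: "A \<in> carrier_mat n n" and B: "B \<in> carrier_mat n n"
  shows "mtr (A * B) n = mtr (B * A) n"
proof -
  have "mtr (A * B) n = (\<Sum>i<n. \<Sum>l<n. A $$ (i, l) * B $$ (l, i))"
    unfolding mtr_def by (rule sum.cong, simp, simp add: mult_entry[OF A B])
  also have "\<dots> = (\<Sum>l<n. \<Sum>i<n. B $$ (l, i) * A $$ (i, l))" by (subst sum.swap) (simp add: mult.commute)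
  also have "\<dots> = mtr (B * A) n"
    unfolding mtr_def by (rule sum.cong, simp, simp add: mult_entry[OF B A])
  finally show ?thesis .
qed

lemma mtr_sim: assumes wit: "similar_mat_wit A B P Q" and A: "A \<in> carrier_mat n n"
  shows "mtr A n = mtr B n"
proof -
  from similar_mat_witD2[OF A wit] have B: "B \<in> carrier_mat n n" and P: "P \<in> carrier_mat n n"
    and Q: "Q \<in> carrier_mat n n" and QP: "Q * P = 1\<^sub>m n" and AE: "A = P * B * Q" by auto
  have "mtr A n = mtr ((P * B) * Q) n" using AE by simp
  also have "\<dots> = mtr (Q * (P * B)) n" by (rule mtr_comm, insert P B Q, auto)
  also have "Q * (P * B) = (Q * P) * B" using P B Q by simp
  also have "\<dots> = B" using QP B by simp
  finally show ?thesis .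
qed

lemma ut_sq: fixes B :: "'a::comm_ring_1 mat" assumes ut: "upper_triangular B" and B: "B \<in> carrier_mat n n" and i: "i < n"
  shows "(B * B) $$ (i, i) = (B $$ (i, i))\<^sup>2"
proof -
  have "(B * B) $$ (i, i) = (\<Sum>l<n. B $$ (i, l) * B $$ (l, i))" by (rule mult_entry[OF B B i i])
  also have "\<dots> = (\<Sum>l<n. if l = i then (B $$ (i, i))\<^sup>2 else 0)"
  proof (rule sum.cong, simp)
    fix l assume l: "l \<in> {..<n}"
    show "B $$ (i, l) * B $$ (l, i) = (if l = i then (B $$ (i, i))\<^sup>2 else 0)"
    proof (cases "l < i")
      case True then have "B $$ (i, l) = 0" using ut B i unfolding upper_triangular_def by auto
      then show ?thesis using True by simp
    next
      case False
      show ?thesis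
      proof (cases "l = i")
        case True then show ?thesis by (simp add: power2_eq_square)
      next
        case ne: False
        then have "i < l" using False by simp
        then have "B $$ (l, i) = 0" using ut B l unfolding upper_triangular_def by auto
        then show ?thesis using ne by simp
      qed
    qed
  qed
  also have "\<dots> = (B $$ (i, i))\<^sup>2" using i by simp
  finally show ?thesis .
qed

context srgp begin

lemma trA: "mtr Ac v = 0"
  unfolding mtr_def by (simp add: Ac_entry adjc_def adj_def irrefl)

lemma trA2: "mtr (Ac * Ac) v = complex_of_real (V * K)"
proof -
  have "mtr (Ac * Ac) v = (\<Sum>i<v. \<Sum>l<v. adjc i l * adjc l i)"
    unfolding mtr_def by (rule sum.cong, simp, simp add: mult_entry[OF Ac_carrier Ac_carrier] Ac_entry)
  also have "\<dots> = (\<Sum>i<v. complex_of_real K)"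
    by (rule sum.cong, simp, subst cnc, auto simp: adjc_def adj_def irrefl)
  finally show ?thesis by simp
qed

lemma eig_facts: obtains es where "mset es = adj_eigenvalues v E" "length es = v"
  "\<And>e. e \<in> set es \<Longrightarrow> e = complex_of_real K \<or> e = complex_of_real r \<or> e = complex_of_real s"
  "sum_list es = 0" "sum_list (map (\<lambda>e. e\<^sup>2) es) = complex_of_real (V * K)"
proof -
  obtain es where cp: "char_poly Ac = (\<Prod>a\<leftarrow>es. [:- a, 1:])" and len: "length es = v"
    using char_poly_factorized[OF Ac_carrier] by blast
  have pr: "proots (char_poly Ac) = mset es"
  proof -
    have "proots (\<Prod>a\<leftarrow>es. [:- a, 1:]) = mset es"
    proof (induction es)
      case Nil then show ?case by simp
    next
      case (Cons a es)
      have lin: "[:- b, 1:] \<noteq> 0" for b :: complex by simp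
      have nz: "(\<Prod>a\<leftarrow>es. [:- a, 1:]) \<noteq> 0" using lin by (auto simp: prod_list_zero_iff)
      have "(\<Prod>a\<leftarrow>a # es. [:- a, 1:]) = [:- a, 1:] * (\<Prod>a\<leftarrow>es. [:- a, 1:])" by simp
      moreover have "proots ([:- a, 1:] * (\<Prod>a\<leftarrow>es. [:- a, 1:])) = proots [:- a, 1:] + proots (\<Prod>a\<leftarrow>es. [:- a, 1:])"
        by (rule proots_mult[OF lin nz])
      ultimately have "proots (\<Prod>a\<leftarrow>a # es. [:- a, 1:]) = proots [:- a, 1:] + proots (\<Prod>a\<leftarrow>es. [:- a, 1:])"
        by simp
      also have "proots [:- a, 1:] = {#a#}" using proots_linear_factor[of "-a"] by simp
      finally show ?case using Cons by simp
    qed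
    then show ?thesis using cp by simp
  qed
  have ae: "adj_eigenvalues v E = mset es" unfolding adj_eigenvalues_def Ac_def[symmetric] pr ..
  obtain B P Q where sd: "schur_decomposition Ac es = (B, P, Q)" by (cases "schur_decomposition Ac es") auto
  from schur_decomposition[OF Ac_carrier cp sd]
  have wit: "similar_mat_wit Ac B P Q" and ut: "upper_triangular B" and dg: "diag_mat B = es" by auto
  from similar_mat_witD2[OF Ac_carrier wit] have B: "B \<in> carrier_mat v v" by auto
  have esi: "es ! i = B $$ (i, i)" if "i < v" for i
    using dg[symmetric] that B unfolding diag_mat_def by auto
  have sl: "sum_list (map f es) = (\<Sum>i<v. f (B $$ (i, i)))" for f :: "complex \<Rightarrow> complex"
  proof -
    have "sum_list (map f es) = (\<Sum>i<length es. f (es ! i))" by (simp add: sum_list_sum_nth atLeast0LessThan)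
    then show ?thesis using len esi by simp
  qed
  have s1: "sum_list es = 0"
  proof -
    have "sum_list es = sum_list (map (\<lambda>x. x) es)" by simp
    also have "\<dots> = mtr B v" unfolding sl mtr_def by simp
    also have "\<dots> = mtr Ac v" using mtr_sim[OF wit Ac_carrier] by simp
    finally show ?thesis using trA by simp
  qed
  have s2: "sum_list (map (\<lambda>e. e\<^sup>2) es) = complex_of_real (V * K)"
  proof -
    have wit2: "similar_mat_wit (Ac ^\<^sub>m 2) (B ^\<^sub>m 2) P Q" by (rule similar_mat_wit_pow[OF wit])
    have A2: "Ac ^\<^sub>m 2 = Ac * Ac" using Ac_carrier by (simp add: numeral_2_eq_2)
    have B2: "B ^\<^sub>m 2 = B * B" using B by (simp add: numeral_2_eq_2)
    have "sum_list (map (\<lambda>e. e\<^sup>2) es) = (\<Sum>i<v. (B * B) $$ (i, i))"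
      unfolding sl by (rule sum.cong, simp, simp add: ut_sq[OF ut B])
    also have "\<dots> = mtr (Ac * Ac) v" using mtr_sim[OF wit2, of v] Ac_carrier unfolding A2 B2 mtr_def by simp
    finally show ?thesis using trA2 by simp
  qed
  have vals: "e = complex_of_real K \<or> e = complex_of_real r \<or> e = complex_of_real s" if e: "e \<in> set es" for e
  proof -
    have "e \<in># proots (char_poly Ac)" using e pr by simp
    then have "poly (char_poly Ac) e = 0" by (cases "char_poly Ac = 0") (auto simp: set_count_proots)
    then have "eigenvalue Ac e" using eigenvalue_root_char_poly[OF Ac_carrier] by simp
    then obtain x where "eigenvector Ac x e" unfolding eigenvalue_def by blast
    then show ?thesis by (rule ev_vals)
  qed
  show ?thesis using that[OF ae[symmetric] len vals s1 s2] .
qed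

end

lemma final_ineq:
  fixes K V m La :: real
  assumes K: "K > 0" and V: "V \<ge> 2" and La: "La > 0" "La < K" and m: "m \<ge> 1"
    and tr: "m * La\<^sup>2 \<le> V * K - K\<^sup>2" and ab: "V \<le> ((m + 1)\<^sup>2 + (m + 1)) / 2"
  shows "K / La > sqrt (K / sqrt V)"
proof -
  define q where "q = sqrt V"
  have q: "q > 1" "q\<^sup>2 = V" using V unfolding q_def by (auto simp: real_less_rsqrt)
  have key: "La\<^sup>2 < K * q"
  proof (cases "K < q")
    case True
    have "La\<^sup>2 < K\<^sup>2" using La by (simp add: power_strict_mono)
    also have "K\<^sup>2 = K * K" by (simp add: power2_eq_square)
    also have "K * K < K * q" using True K by simp
    finally show ?thesis .
  next
    case False
    have mq: "m * q > V - K"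
    proof (rule ccontr)
      assume "\<not> m * q > V - K"
      then have "m * q \<le> q * q - q" using False q by (simp add: power2_eq_square)
      then have "m * q \<le> (q - 1) * q" by (simp add: algebra_simps)
      then have "m \<le> q - 1" using q by (intro mult_right_le_imp_le[of m q "q - 1"]) auto
      then have m1: "m + 1 \<le> q" by simp
      have "(m + 1)\<^sup>2 \<le> q\<^sup>2" using m1 m by (intro power_mono) auto
      then have "(m + 1)\<^sup>2 + (m + 1) \<le> q\<^sup>2 + q" using m1 by linarith
      then have "(m + 1)\<^sup>2 + (m + 1) \<le> V + q" using q(2) by simp
      then have "((m + 1)\<^sup>2 + (m + 1)) / 2 \<le> (V + q) / 2" by (rule divide_right_mono) simp
      then have "V \<le> (V + q) / 2" using ab by (rule order.trans[rotated])
      then have "V \<le> q" by (simp add: field_simps)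
      then have "q * q \<le> q * 1" using q by (simp add: power2_eq_square)
      then show False using q by simp
    qed
    have "m * La\<^sup>2 \<le> K * (V - K)" using tr by (simp add: power2_eq_square algebra_simps)
    also have "\<dots> < K * (m * q)" using mq K by simp
    finally have "m * La\<^sup>2 < m * (K * q)" by (simp add: mult_ac)
    then show ?thesis using m by simp
  qed
  have pos: "K / La > 0" using K La by simp
  have "K / sqrt V < (K / La)\<^sup>2"
  proof -
    have "(K / La)\<^sup>2 = K * K / La\<^sup>2" by (simp add: power2_eq_square)
    moreover have "K / q < K * K / La\<^sup>2"
    proof -
      have "K * La\<^sup>2 < K * (K * q)" using key K by simp
      then show ?thesis using q La by (simp add: field_simps power2_eq_square)
    qed
    ultimately show ?thesis unfolding q_def by simp
  qed
  then show ?thesis using pos by (intro real_less_lsqrt) auto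
qed

lemma count_sum: fixes f :: "complex \<Rightarrow> complex"
  assumes "set es \<subseteq> {a, b, c}" "a \<noteq> b" "a \<noteq> c" "b \<noteq> c"
  shows "sum_list (map f es) = of_nat (count_list es a) * f a + of_nat (count_list es b) * f b + of_nat (count_list es c) * f c"
  using assms by (induction es) (auto simp: algebra_simps)

lemma count_len:
  assumes "set es \<subseteq> {a, b, c}" "a \<noteq> b" "a \<noteq> c" "b \<noteq> c"
  shows "length es = count_list es a + count_list es b + count_list es c"
  using assms by (induction es) auto

context srgp begin

lemma pair_rs': "pair r s" and pair_sr': "pair s r" unfolding pair_def by auto

lemma final_for: assumes pr: "pair t t'" and nt: "real n = V * (ex t t' + ez t t')" and n1: "n \<ge> 1"
  and tr: "real n * t\<^sup>2 \<le> V * K - K\<^sup>2"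
  shows "K / \<bar>t\<bar> > sqrt (K / sqrt V)"
proof -
  interpret sp: srgp_pair v E k lam mu t t' by unfold_locales (rule pr)
  have e0: "V * sp.e0 = real n" unfolding sp.e0_def sp.x0_def sp.z0_def nt ..
  have ab: "V \<le> ((real n + 1)\<^sup>2 + (real n + 1)) / 2" using sp.abs_bound unfolding e0 .
  have Kp: "K > 0" using M_pos M_lt_K by simp
  have V2: "V \<ge> 2" using V_ge Kp by simp
  have tK: "\<bar>t\<bar> < K" using pair_props[OF pr] by simp
  have t0: "\<bar>t\<bar> > 0" using pr r_pos s_neg unfolding pair_def by auto
  show ?thesis
    by (rule final_ineq[OF Kp V2 t0 tK _ _ ab]) (use n1 tr in auto)
qed

theorem main: "K / Lambda_reg v E k > sqrt (K / sqrt V)"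
proof -
  obtain es where ms: "mset es = adj_eigenvalues v E" and len: "length es = v"
    and vals: "\<And>e. e \<in> set es \<Longrightarrow> e = complex_of_real K \<or> e = complex_of_real r \<or> e = complex_of_real s"
    and s1: "sum_list es = 0" and s2: "sum_list (map (\<lambda>e. e\<^sup>2) es) = complex_of_real (V * K)"
    using eig_facts by blast
  define Kc where "Kc = complex_of_real K"
  define rc where "rc = complex_of_real r"
  define sc where "sc = complex_of_real s"
  have d: "Kc \<noteq> rc" "Kc \<noteq> sc" "rc \<noteq> sc" unfolding Kc_def rc_def sc_def of_real_eq_iff
    using r_ne_K s_ne_K r_gt_s by auto
  have sub: "set es \<subseteq> {Kc, rc, sc}" using vals unfolding Kc_def rc_def sc_def by blast
  define nK where "nK = count_list es Kc"
  define nr where "nr = count_list es rc"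
  define ns where "ns = count_list es sc"
  have L1: "nK + nr + ns = v" using count_len[OF sub d] len unfolding nK_def nr_def ns_def by simp
  have "sum_list (map (\<lambda>e. e) es) = of_nat nK * Kc + of_nat nr * rc + of_nat ns * sc"
    unfolding nK_def nr_def ns_def by (rule count_sum[OF sub d])
  then have "complex_of_real (real nK * K + real nr * r + real ns * s) = 0"
    using s1 unfolding Kc_def rc_def sc_def by simp
  then have R1: "real nK * K + real nr * r + real ns * s = 0" by (simp only: of_real_eq_0_iff)
  have "sum_list (map (\<lambda>e. e\<^sup>2) es) = of_nat nK * Kc\<^sup>2 + of_nat nr * rc\<^sup>2 + of_nat ns * sc\<^sup>2"
    unfolding nK_def nr_def ns_def by (rule count_sum[OF sub d])
  then have "complex_of_real (real nK * K\<^sup>2 + real nr * r\<^sup>2 + real ns * s\<^sup>2) = complex_of_real (V * K)"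
    using s2 unfolding Kc_def rc_def sc_def by simp
  then have R2: "real nK * K\<^sup>2 + real nr * r\<^sup>2 + real ns * s\<^sup>2 = V * K" by (simp only: of_real_eq_iff)
  have L1r: "real nK + real nr + real ns = V" using L1 by (metis of_nat_add)
  have nK1: "nK = 1"
  proof -
    have "real nr * r\<^sup>2 + real ns * s\<^sup>2 = (L - M) * (real nr * r + real ns * s) + (K - M) * (real nr + real ns)"
      unfolding r_eq s_eq by (simp add: algebra_simps)
    also have "\<dots> = (L - M) * (- real nK * K) + (K - M) * (V - real nK)"
    proof -
      have X: "real nr * r + real ns * s = - real nK * K" using R1 by linarith
      have Y: "real nr + real ns = V - real nK" using L1r by linarith
      show ?thesis by (simp only: X Y)
    qed
    finally have e1: "real nK * (K\<^sup>2 - (L - M) * K - (K - M)) = V * K - (K - M) * V" using R2 by (simp add: algebra_simps)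
    have e2: "K\<^sup>2 - (L - M) * K - (K - M) = M * V"
      using pK unfolding rs_sum[symmetric] by (simp add: power2_eq_square algebra_simps rs_prod)
    have e3: "V * K - (K - M) * V = 1 * (M * V)" by (simp add: algebra_simps)
    have "real nK * (M * V) = 1 * (M * V)" using e1 unfolding e2 e3 .
    moreover have "M * V \<noteq> 0" using M_pos V_pos by simp
    ultimately have "real nK = 1" by (rule mult_right_cancel[THEN iffD1, rotated])
    then show ?thesis by simp
  qed
  have A1: "real nr * r + real ns * s = - K" using R1 nK1 by simp
  have A2: "real nr + real ns = V - 1" using L1r nK1 by simp
  have A3: "real nr * r\<^sup>2 + real ns * s\<^sup>2 = V * K - K\<^sup>2" using R2 nK1 by simp
  have rs0: "r - s \<noteq> 0" using r_gt_s by simp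
  have nr_eq: "real nr = V * (ex r s + ez r s)"
  proof -
    have "real ns = V - 1 - real nr" using A2 by linarith
    then have "real nr * r + (V - 1 - real nr) * s = - K" using A1 by simp
    then have h: "real nr * (r - s) = - K - (V - 1) * s" by (simp add: algebra_simps)
    have a: "V * ez r s = - (K - s) / (r - s)" unfolding ez_def using V_pos by simp
    have b: "V * ex r s = - (V * s) / (r - s)" unfolding ex_def by simp
    have "V * (ex r s + ez r s) = - (V * s) / (r - s) + - (K - s) / (r - s)" unfolding distrib_left a b ..
    also have "\<dots> = (- (V * s) + - (K - s)) / (r - s)" by (simp only: add_divide_distrib)
    also have "- (V * s) + - (K - s) = real nr * (r - s)" unfolding h by (simp add: algebra_simps)
    also have "real nr * (r - s) / (r - s) = real nr" using rs0 by simp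
    finally show ?thesis ..
  qed
  have ns_eq: "real ns = V * (ex s r + ez s r)"
  proof -
    have "real nr = V - 1 - real ns" using A2 by linarith
    then have "(V - 1 - real ns) * r + real ns * s = - K" using A1 by simp
    then have h: "real ns * (s - r) = - K - (V - 1) * r" by (simp add: algebra_simps)
    have sr0: "s - r \<noteq> 0" using rs0 by simp
    have a: "V * ez s r = - (K - r) / (s - r)" unfolding ez_def using V_pos by simp
    have b: "V * ex s r = - (V * r) / (s - r)" unfolding ex_def by simp
    have "V * (ex s r + ez s r) = - (V * r) / (s - r) + - (K - r) / (s - r)" unfolding distrib_left a b ..
    also have "\<dots> = (- (V * r) + - (K - r)) / (s - r)" by (simp only: add_divide_distrib)
    also have "- (V * r) + - (K - r) = real ns * (s - r)" unfolding h by (simp add: algebra_simps)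
    also have "real ns * (s - r) / (s - r) = real ns" using sr0 by simp
    finally show ?thesis ..
  qed
  have "real ns * s\<^sup>2 \<ge> 0" "real nr * r\<^sup>2 \<ge> 0" by simp_all
  then have trr: "real nr * r\<^sup>2 \<le> V * K - K\<^sup>2" and trs: "real ns * s\<^sup>2 \<le> V * K - K\<^sup>2" using A3 by linarith+
  define S where "S = set_mset (mset es - {#Kc#})"
  have cnt: "count (mset es) x = count_list es x" for x by (rule count_mset)
  have cK1: "count (mset es) Kc = 1" using nK1 unfolding nK_def cnt .
  have Kin: "Kc \<in># mset es" using cK1 by (metis count_eq_zero_iff zero_neq_one)
  have S_sub: "S \<subseteq> {rc, sc}"
  proof
    fix x assume x: "x \<in> S"
    then have "x \<in># mset es" unfolding S_def by (meson in_diffD)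
    moreover have "x \<noteq> Kc"
    proof
      assume xK: "x = Kc"
      have "count (mset es - {#Kc#}) Kc = 0" using cK1 by simp
      moreover have "Kc \<in># mset es - {#Kc#}" using x xK unfolding S_def by simp
      ultimately show False by (metis count_eq_zero_iff)
    qed
    ultimately show "x \<in> {rc, sc}" using sub by auto
  qed
  have S_ne: "S \<noteq> {}"
  proof -
    have "size (mset es - {#Kc#}) = v - 1" using size_Diff_singleton[OF Kin] len by simp
    moreover have "v - 1 > 0" using k_le by simp
    ultimately show ?thesis unfolding S_def by auto
  qed
  have S_fin: "finite S" unfolding S_def by simp
  have La: "Lambda_reg v E k = Max (cmod ` S)" unfolding Lambda_reg_def S_def ms[symmetric] Kc_def ..
  have "Max (cmod ` S) \<in> cmod ` S" using S_ne S_fin by (intro Max_in) auto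
  then obtain th where th: "th \<in> S" "Lambda_reg v E k = cmod th" using La by auto
  have cnt_pos: "count_list es th \<ge> 1"
  proof -
    have "th \<in># mset es" using th(1) unfolding S_def by (meson in_diffD)
    then show ?thesis by (simp add: cnt[symmetric] Suc_le_eq)
  qed
  show ?thesis
  proof (cases "th = rc")
    case True
    then have "Lambda_reg v E k = \<bar>r\<bar>" using th unfolding rc_def by simp
    moreover have "K / \<bar>r\<bar> > sqrt (K / sqrt V)"
      by (rule final_for[OF pair_rs' nr_eq]) (use cnt_pos True trr in \<open>auto simp: nr_def\<close>)
    ultimately show ?thesis by simp
  next
    case False
    then have T: "th = sc" using S_sub th by auto
    then have "Lambda_reg v E k = \<bar>s\<bar>" using th unfolding sc_def by simp
    moreover have "K / \<bar>s\<bar> > sqrt (K / sqrt V)"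
      by (rule final_for[OF pair_sr' ns_eq]) (use cnt_pos T trs in \<open>auto simp: ns_def\<close>)
    ultimately show ?thesis by simp
  qed
qed

end

theorem lemma1p3:
  fixes v k lam mu :: nat and E :: "nat \<Rightarrow> nat \<Rightarrow> bool"
  assumes "primitive_srg v E k lam mu"
  shows "real k / Lambda_reg v E k > sqrt (real k / sqrt (real v))"
proof -
  interpret srgp v E k lam mu by unfold_locales (rule assms)
  show ?thesis using main by simp
qed

end
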